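(* Let $G=\mathrm{Aut}(\mathbf{K})$ for a Fraïssé structure $\mathbf{K}$ with exhaustion $\bigcup_n\mathbf{A}_n$, and fix a minimal subflow $M\subseteq S(G)$. The following are equivalent: (1) retractions of $S(G)$ onto $M$ separate points of $S(G)$, i.e. for all $\alpha\neq\gamma$ in $S(G)$ there is a retraction $\phi:S(G)\to M$ with $\phi(\alpha)\neq\phi(\gamma)$; (2) for every $m<\omega$, $B'_m=\mathcal{P}(H_m)$.
   Context: $\mathbf{K}$ is a countably infinite ultrahomogeneous relational structure; $\mathbf{A}_1\subseteq\mathbf{A}_2\subseteq\cdots$ finite substructures, $|\mathbf{A}_n|=n$, union $\mathbf{K}$; $H_n=\mathrm{Emb}(\mathbf{A}_n,\mathbf{K})$. $S(G)$ is the inverse limit of the spaces $\beta H_n$ of ultrafilters along the continuous extensions of restriction maps $H_n\to H_m$, with right $G$-action: $S\in(\alpha g)(m)$ iff $\{x\in H_n:x\circ g|_{\mathbf{A}_m}\in S\}\in\alpha(n)$ (for $n$ with $g(\mathbf{A}_m)\subseteq\mathbf{A}_n$). A minimal subflow is a nonempty closed $G$-invariant set with no proper such subset; a retraction onto $M$ is a continuous $G$-equivariant $\phi:S(G)\to M$ with $\phi|_M=\mathrm{id}$. Identify subsets of $H_n$ with $2^{H_n}$, right action $(\chi\cdot g)(f)=\chi(g\circ f)$; $S\subseteq H_n$ is minimal if $\overline{\chi_S\cdot G}$ is a minimal $G$-flow. $B_n$ is the Boolean algebra generated by the minimal subsets of $H_n$; for $T\subseteq H_m$ and $n\geq m$,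 $i^n_m(T)=\{s\in H_n:s|_{\mathbf{A}_m}\in T\}$; $B'_m=\{T\subseteq H_m:\exists n\geq m\ (i^n_m(T)\in B_n)\}$. *)

theory Defs
  imports "HOL-Library.FuncSet" "HOL-Library.Countable_Set"
begin

text \<open>A relational structure is given by a universe V :: 'a set and an
interpretation R :: 'r => 'a list => bool of the relation symbols
(R r xs: the tuple xs is in the relation r).  Substructures are induced.\<close>

definition preserves :: "('r \<Rightarrow> 'a list \<Rightarrow> bool) \<Rightarrow> 'a set \<Rightarrow> ('a \<Rightarrow> 'a) \<Rightarrow> bool" where
  "preserves R A f \<longleftrightarrow> (\<forall>r xs. set xs \<subseteq> A \<longrightarrow> (R r (map f xs) \<longleftrightarrow> R r xs))"

definition is_emb :: "'a set \<Rightarrow> ('r \<Rightarrow> 'a list \<Rightarrow> bool) \<Rightarrow> 'a set \<Rightarrow> ('a \<Rightarrow> 'a) \<Rightarrow> bool" where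
  "is_emb V R A f \<longleftrightarrow> f ` A \<subseteq> V \<and> inj_on f A \<and> preserves R A f"

definition Emb :: "'a set \<Rightarrow> ('r \<Rightarrow> 'a list \<Rightarrow> bool) \<Rightarrow> 'a set \<Rightarrow> ('a \<Rightarrow> 'a) set" where
  "Emb V R A = {f \<in> extensional A. is_emb V R A f}"

definition Aut :: "'a set \<Rightarrow> ('r \<Rightarrow> 'a list \<Rightarrow> bool) \<Rightarrow> ('a \<Rightarrow> 'a) set" where
  "Aut V R = {g \<in> extensional V. bij_betw g V V \<and> preserves R V g}"

definition ultrahomogeneous :: "'a set \<Rightarrow> ('r \<Rightarrow> 'a list \<Rightarrow> bool) \<Rightarrow> bool" where
  "ultrahomogeneous V R \<longleftrightarrow>
     (\<forall>A B f. finite A \<and> A \<subseteq> V \<and> B \<subseteq> V \<and> bij_betw f A B \<and> preserves R A f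
        \<longrightarrow> (\<exists>g\<in>Aut V R. \<forall>x\<in>A. g x = f x))"

definition exhaustion :: "'a set \<Rightarrow> (nat \<Rightarrow> 'a set) \<Rightarrow> bool" where
  "exhaustion V A \<longleftrightarrow> (\<forall>n. A n \<subseteq> A (Suc n)) \<and> (\<forall>n. finite (A n) \<and> card (A n) = n)
      \<and> (\<Union>n. A n) = V"

definition H :: "'a set \<Rightarrow> ('r \<Rightarrow> 'a list \<Rightarrow> bool) \<Rightarrow> (nat \<Rightarrow> 'a set) \<Rightarrow> nat \<Rightarrow> ('a \<Rightarrow> 'a) set" where
  "H V R A n = Emb V R (A n)"

definition ultrafilter_on :: "'b set \<Rightarrow> 'b set set \<Rightarrow> bool" where
  "ultrafilter_on X U \<longleftrightarrow> U \<subseteq> Pow X \<and> X \<in> U \<and> {} \<notin> U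
     \<and> (\<forall>Y\<in>U. \<forall>Z\<in>U. Y \<inter> Z \<in> U)
     \<and> (\<forall>Y\<in>U. \<forall>Z. Y \<subseteq> Z \<and> Z \<subseteq> X \<longrightarrow> Z \<in> U)
     \<and> (\<forall>Y. Y \<subseteq> X \<longrightarrow> Y \<in> U \<or> X - Y \<in> U)"

text \<open>Continuous extension beta X -> beta Y of a map pi : X -> Y.\<close>
definition push :: "'b set \<Rightarrow> 'c set \<Rightarrow> ('b \<Rightarrow> 'c) \<Rightarrow> 'b set set \<Rightarrow> 'c set set" where
  "push X Y pi p = {T. T \<subseteq> Y \<and> {x\<in>X. pi x \<in> T} \<in> p}"

text \<open>S(G): the inverse limit of the beta H_n along restriction maps.\<close>
definition SG :: "'a set \<Rightarrow> ('r \<Rightarrow> 'a list \<Rightarrow> bool) \<Rightarrow> (nat \<Rightarrow> 'a set)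
     \<Rightarrow> (nat \<Rightarrow> ('a \<Rightarrow> 'a) set set) set" where
  "SG V R A = {\<alpha>. (\<forall>n. ultrafilter_on (H V R A n) (\<alpha> n))
      \<and> (\<forall>m n. m \<le> n \<longrightarrow> \<alpha> m = push (H V R A n) (H V R A m) (\<lambda>x. restrict x (A m)) (\<alpha> n))}"

definition act :: "'a set \<Rightarrow> ('r \<Rightarrow> 'a list \<Rightarrow> bool) \<Rightarrow> (nat \<Rightarrow> 'a set)
     \<Rightarrow> (nat \<Rightarrow> ('a \<Rightarrow> 'a) set set) \<Rightarrow> ('a \<Rightarrow> 'a) \<Rightarrow> (nat \<Rightarrow> ('a \<Rightarrow> 'a) set set)" where
  "act V R A \<alpha> g = (\<lambda>m. let n = (LEAST n. g ` A m \<subseteq> A n) in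
      push (H V R A n) (H V R A m) (\<lambda>x. restrict (x \<circ> g) (A m)) (\<alpha> n))"

definition sg_basic :: "'a set \<Rightarrow> ('r \<Rightarrow> 'a list \<Rightarrow> bool) \<Rightarrow> (nat \<Rightarrow> 'a set)
     \<Rightarrow> nat \<Rightarrow> ('a \<Rightarrow> 'a) set \<Rightarrow> (nat \<Rightarrow> ('a \<Rightarrow> 'a) set set) set" where
  "sg_basic V R A n X = {\<alpha> \<in> SG V R A. X \<in> \<alpha> n}"

definition sg_open :: "'a set \<Rightarrow> ('r \<Rightarrow> 'a list \<Rightarrow> bool) \<Rightarrow> (nat \<Rightarrow> 'a set)
     \<Rightarrow> (nat \<Rightarrow> ('a \<Rightarrow> 'a) set set) set \<Rightarrow> bool" where
  "sg_open V R A U \<longleftrightarrow> U \<subseteq> SG V R A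
     \<and> (\<forall>\<alpha>\<in>U. \<exists>n X. X \<in> \<alpha> n \<and> sg_basic V R A n X \<subseteq> U)"

definition sg_closed :: "'a set \<Rightarrow> ('r \<Rightarrow> 'a list \<Rightarrow> bool) \<Rightarrow> (nat \<Rightarrow> 'a set)
     \<Rightarrow> (nat \<Rightarrow> ('a \<Rightarrow> 'a) set set) set \<Rightarrow> bool" where
  "sg_closed V R A M \<longleftrightarrow> M \<subseteq> SG V R A \<and> sg_open V R A (SG V R A - M)"

definition sg_continuous :: "'a set \<Rightarrow> ('r \<Rightarrow> 'a list \<Rightarrow> bool) \<Rightarrow> (nat \<Rightarrow> 'a set)
     \<Rightarrow> ((nat \<Rightarrow> ('a \<Rightarrow> 'a) set set) \<Rightarrow> (nat \<Rightarrow> ('a \<Rightarrow> 'a) set set)) \<Rightarrow> bool" where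
  "sg_continuous V R A \<phi> \<longleftrightarrow>
     (\<forall>U. sg_open V R A U \<longrightarrow> sg_open V R A {\<alpha> \<in> SG V R A. \<phi> \<alpha> \<in> U})"

definition subflow :: "'a set \<Rightarrow> ('r \<Rightarrow> 'a list \<Rightarrow> bool) \<Rightarrow> (nat \<Rightarrow> 'a set)
     \<Rightarrow> (nat \<Rightarrow> ('a \<Rightarrow> 'a) set set) set \<Rightarrow> bool" where
  "subflow V R A M \<longleftrightarrow> M \<noteq> {} \<and> sg_closed V R A M
     \<and> (\<forall>\<alpha>\<in>M. \<forall>g\<in>Aut V R. act V R A \<alpha> g \<in> M)"

definition minimal_subflow :: "'a set \<Rightarrow> ('r \<Rightarrow> 'a list \<Rightarrow> bool) \<Rightarrow> (nat \<Rightarrow> 'a set)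
     \<Rightarrow> (nat \<Rightarrow> ('a \<Rightarrow> 'a) set set) set \<Rightarrow> bool" where
  "minimal_subflow V R A M \<longleftrightarrow> subflow V R A M
     \<and> (\<forall>N. N \<subseteq> M \<and> subflow V R A N \<longrightarrow> N = M)"

definition retraction :: "'a set \<Rightarrow> ('r \<Rightarrow> 'a list \<Rightarrow> bool) \<Rightarrow> (nat \<Rightarrow> 'a set)
     \<Rightarrow> (nat \<Rightarrow> ('a \<Rightarrow> 'a) set set) set
     \<Rightarrow> ((nat \<Rightarrow> ('a \<Rightarrow> 'a) set set) \<Rightarrow> (nat \<Rightarrow> ('a \<Rightarrow> 'a) set set)) \<Rightarrow> bool" where
  "retraction V R A M \<phi> \<longleftrightarrow> (\<forall>\<alpha>\<in>SG V R A. \<phi> \<alpha> \<in> M) \<and> sg_continuous V R A \<phi>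
     \<and> (\<forall>\<alpha>\<in>SG V R A. \<forall>g\<in>Aut V R. \<phi> (act V R A \<alpha> g) = act V R A (\<phi> \<alpha>) g)
     \<and> (\<forall>\<alpha>\<in>M. \<phi> \<alpha> = \<alpha>)"

text \<open>The flow 2^{H_n}: subsets S of H_n, (S.g) = {f. g o f in S}, product topology.\<close>
definition act2 :: "'a set \<Rightarrow> ('r \<Rightarrow> 'a list \<Rightarrow> bool) \<Rightarrow> (nat \<Rightarrow> 'a set)
     \<Rightarrow> nat \<Rightarrow> ('a \<Rightarrow> 'a) set \<Rightarrow> ('a \<Rightarrow> 'a) \<Rightarrow> ('a \<Rightarrow> 'a) set" where
  "act2 V R A n S g = {f \<in> H V R A n. restrict (g \<circ> f) (A n) \<in> S}"

definition closed2 :: "'a set \<Rightarrow> ('r \<Rightarrow> 'a list \<Rightarrow> bool) \<Rightarrow> (nat \<Rightarrow> 'a set)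
     \<Rightarrow> nat \<Rightarrow> ('a \<Rightarrow> 'a) set set \<Rightarrow> bool" where
  "closed2 V R A n Z \<longleftrightarrow> Z \<subseteq> Pow (H V R A n) \<and>
     (\<forall>T. T \<subseteq> H V R A n \<and> (\<forall>F. finite F \<and> F \<subseteq> H V R A n \<longrightarrow> (\<exists>T'\<in>Z. T' \<inter> F = T \<inter> F))
        \<longrightarrow> T \<in> Z)"

definition orbit_closure2 :: "'a set \<Rightarrow> ('r \<Rightarrow> 'a list \<Rightarrow> bool) \<Rightarrow> (nat \<Rightarrow> 'a set)
     \<Rightarrow> nat \<Rightarrow> ('a \<Rightarrow> 'a) set \<Rightarrow> ('a \<Rightarrow> 'a) set set" where
  "orbit_closure2 V R A n S = {T. T \<subseteq> H V R A n \<and>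
     (\<forall>F. finite F \<and> F \<subseteq> H V R A n \<longrightarrow> (\<exists>g\<in>Aut V R. act2 V R A n S g \<inter> F = T \<inter> F))}"

definition minimal_flow2 :: "'a set \<Rightarrow> ('r \<Rightarrow> 'a list \<Rightarrow> bool) \<Rightarrow> (nat \<Rightarrow> 'a set)
     \<Rightarrow> nat \<Rightarrow> ('a \<Rightarrow> 'a) set set \<Rightarrow> bool" where
  "minimal_flow2 V R A n Y \<longleftrightarrow> Y \<noteq> {} \<and> closed2 V R A n Y
     \<and> (\<forall>T\<in>Y. \<forall>g\<in>Aut V R. act2 V R A n T g \<in> Y)
     \<and> (\<forall>Z. Z \<subseteq> Y \<and> Z \<noteq> {} \<and> closed2 V R A n Z \<and> (\<forall>T\<in>Z. \<forall>g\<in>Aut V R. act2 V R A n T g \<in> Z)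
          \<longrightarrow> Z = Y)"

definition minimal_subset :: "'a set \<Rightarrow> ('r \<Rightarrow> 'a list \<Rightarrow> bool) \<Rightarrow> (nat \<Rightarrow> 'a set)
     \<Rightarrow> nat \<Rightarrow> ('a \<Rightarrow> 'a) set \<Rightarrow> bool" where
  "minimal_subset V R A n S \<longleftrightarrow> S \<subseteq> H V R A n \<and> minimal_flow2 V R A n (orbit_closure2 V R A n S)"

inductive_set gen_ba :: "'b set \<Rightarrow> 'b set set \<Rightarrow> 'b set set" for X Gs where
  gen: "S \<in> Gs \<Longrightarrow> S \<in> gen_ba X Gs"
| top: "X \<in> gen_ba X Gs"
| compl: "S \<in> gen_ba X Gs \<Longrightarrow> X - S \<in> gen_ba X Gs"
| un: "S \<in> gen_ba X Gs \<Longrightarrow> T \<in> gen_ba X Gs \<Longrightarrow> S \<union> T \<in> gen_ba X Gs"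

definition Bn :: "'a set \<Rightarrow> ('r \<Rightarrow> 'a list \<Rightarrow> bool) \<Rightarrow> (nat \<Rightarrow> 'a set)
     \<Rightarrow> nat \<Rightarrow> ('a \<Rightarrow> 'a) set set" where
  "Bn V R A n = gen_ba (H V R A n) {S. minimal_subset V R A n S}"

definition iup :: "'a set \<Rightarrow> ('r \<Rightarrow> 'a list \<Rightarrow> bool) \<Rightarrow> (nat \<Rightarrow> 'a set)
     \<Rightarrow> nat \<Rightarrow> nat \<Rightarrow> ('a \<Rightarrow> 'a) set \<Rightarrow> ('a \<Rightarrow> 'a) set" where
  "iup V R A n m T = {s \<in> H V R A n. restrict s (A m) \<in> T}"

definition Bprime :: "'a set \<Rightarrow> ('r \<Rightarrow> 'a list \<Rightarrow> bool) \<Rightarrow> (nat \<Rightarrow> 'a set)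
     \<Rightarrow> nat \<Rightarrow> ('a \<Rightarrow> 'a) set set" where
  "Bprime V R A m = {T. T \<subseteq> H V R A m \<and> (\<exists>n\<ge>m. iup V R A n m T \<in> Bn V R A n)}"

end

theory Submission
  imports Defs
begin


section \<open>Ultrafilters\<close>

lemma uf_sub: "ultrafilter_on X U \<Longrightarrow> Y \<in> U \<Longrightarrow> Y \<subseteq> X"
  by (auto simp: ultrafilter_on_def)
lemma uf_top: "ultrafilter_on X U \<Longrightarrow> X \<in> U"
  by (auto simp: ultrafilter_on_def)
lemma uf_empty: "ultrafilter_on X U \<Longrightarrow> {} \<notin> U"
  by (auto simp: ultrafilter_on_def)
lemma uf_int: "ultrafilter_on X U \<Longrightarrow> Y \<in> U \<Longrightarrow> Z \<in> U \<Longrightarrow> Y \<inter> Z \<in> U"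
  by (auto simp: ultrafilter_on_def)
lemma uf_mono: "ultrafilter_on X U \<Longrightarrow> Y \<in> U \<Longrightarrow> Y \<subseteq> Z \<Longrightarrow> Z \<subseteq> X \<Longrightarrow> Z \<in> U"
  unfolding ultrafilter_on_def by blast
lemma uf_ne: "ultrafilter_on X U \<Longrightarrow> Y \<in> U \<Longrightarrow> Y \<noteq> {}"
  by (auto simp: ultrafilter_on_def)
lemma uf_compl: "ultrafilter_on X U \<Longrightarrow> Y \<subseteq> X \<Longrightarrow> (X - Y \<in> U) \<longleftrightarrow> Y \<notin> U"
proof -
  assume u: "ultrafilter_on X U" and y: "Y \<subseteq> X"
  show ?thesis
  proof
    assume "X - Y \<in> U" show "Y \<notin> U"
    proof
      assume "Y \<in> U"
      with \<open>X - Y \<in> U\<close> have "Y \<inter> (X - Y) \<in> U" using uf_int[OF u] by blast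
      then show False using uf_empty[OF u] by auto
    qed
  next
    assume "Y \<notin> U" then show "X - Y \<in> U" using u y unfolding ultrafilter_on_def by blast
  qed
qed
lemma uf_un: "ultrafilter_on X U \<Longrightarrow> Y \<subseteq> X \<Longrightarrow> Z \<subseteq> X \<Longrightarrow> (Y \<union> Z \<in> U) \<longleftrightarrow> Y \<in> U \<or> Z \<in> U"
proof -
  assume u: "ultrafilter_on X U" and y: "Y \<subseteq> X" and z: "Z \<subseteq> X"
  show ?thesis
  proof
    assume a: "Y \<union> Z \<in> U"
    show "Y \<in> U \<or> Z \<in> U"
    proof (rule ccontr)
      assume "\<not> (Y \<in> U \<or> Z \<in> U)"
      then have "X - Y \<in> U" "X - Z \<in> U" using uf_compl[OF u] y z by auto
      then have "(X - Y) \<inter> (X - Z) \<inter> (Y \<union> Z) \<in> U" using uf_int[OF u] a by blast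
      moreover have "(X - Y) \<inter> (X - Z) \<inter> (Y \<union> Z) = {}" by blast
      ultimately show False using uf_empty[OF u] by simp
    qed
  next
    assume "Y \<in> U \<or> Z \<in> U" then show "Y \<union> Z \<in> U" using uf_mono[OF u] y z by blast
  qed
qed
lemma uf_eqI: "ultrafilter_on X U \<Longrightarrow> ultrafilter_on X U' \<Longrightarrow> U \<subseteq> U' \<Longrightarrow> U = U'"
proof -
  assume u: "ultrafilter_on X U" and u': "ultrafilter_on X U'" and s: "U \<subseteq> U'"
  show "U = U'"
  proof
    show "U' \<subseteq> U"
    proof
      fix Y assume "Y \<in> U'"
      then have y: "Y \<subseteq> X" using uf_sub[OF u'] by auto
      show "Y \<in> U"
      proof (rule ccontr)
        assume "Y \<notin> U" then have "X - Y \<in> U" using uf_compl[OF u y] by simp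
        then have "X - Y \<in> U'" using s by auto
        then show False using uf_compl[OF u' y] \<open>Y \<in> U'\<close> by simp
      qed
    qed
  qed fact
qed
lemma uf_principal: "x \<in> X \<Longrightarrow> ultrafilter_on X {T. T \<subseteq> X \<and> x \<in> T}"
  unfolding ultrafilter_on_def by auto

lemma uf_Inter_fin:
  assumes u: "ultrafilter_on X U" and f: "finite F"
  shows "(\<forall>y\<in>F. P y \<in> U) \<Longrightarrow> X \<inter> (\<Inter>y\<in>F. P y) \<in> U"
  using f
proof (induction F)
  case empty then show ?case using uf_top[OF u] by simp
next
  case (insert a F)
  then have "X \<inter> (\<Inter>y\<in>F. P y) \<in> U" "P a \<in> U" by auto
  then have "P a \<inter> (X \<inter> (\<Inter>y\<in>F. P y)) \<in> U" using uf_int[OF u] by blast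
  then show ?case by (simp add: Int_left_commute)
qed

definition filt :: "'b set \<Rightarrow> 'b set set \<Rightarrow> bool" where
  "filt Z F \<longleftrightarrow> F \<subseteq> Pow Z \<and> {} \<notin> F \<and> (\<forall>a\<in>F. \<forall>b\<in>F. a \<inter> b \<in> F)
     \<and> (\<forall>a\<in>F. \<forall>c. a \<subseteq> c \<and> c \<subseteq> Z \<longrightarrow> c \<in> F)"

lemma filtD1: "filt Z F \<Longrightarrow> a \<in> F \<Longrightarrow> a \<subseteq> Z" unfolding filt_def by blast
lemma filtD2: "filt Z F \<Longrightarrow> {} \<notin> F" unfolding filt_def by blast
lemma filtD3: "filt Z F \<Longrightarrow> a \<in> F \<Longrightarrow> b \<in> F \<Longrightarrow> a \<inter> b \<in> F" unfolding filt_def by blast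
lemma filtD4: "filt Z F \<Longrightarrow> a \<in> F \<Longrightarrow> a \<subseteq> c \<Longrightarrow> c \<subseteq> Z \<Longrightarrow> c \<in> F" unfolding filt_def by blast
lemma filtI: "F \<subseteq> Pow Z \<Longrightarrow> {} \<notin> F \<Longrightarrow> (\<And>a b. a \<in> F \<Longrightarrow> b \<in> F \<Longrightarrow> a \<inter> b \<in> F)
  \<Longrightarrow> (\<And>a c. a \<in> F \<Longrightarrow> a \<subseteq> c \<Longrightarrow> c \<subseteq> Z \<Longrightarrow> c \<in> F) \<Longrightarrow> filt Z F"
  unfolding filt_def by blast

lemma uf_exists:
  assumes B: "B \<subseteq> Pow Z" "B \<noteq> {}" "{} \<notin> B" "\<And>a b. a \<in> B \<Longrightarrow> b \<in> B \<Longrightarrow> \<exists>c\<in>B. c \<subseteq> a \<inter> b"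
  shows "\<exists>U. ultrafilter_on Z U \<and> B \<subseteq> U"
proof -
  define F0 where "F0 = {a. a \<subseteq> Z \<and> (\<exists>b\<in>B. b \<subseteq> a)}"
  define \<A> where "\<A> = {F. F0 \<subseteq> F \<and> filt Z F}"
  have "filt Z F0"
  proof (rule filtI)
    show "F0 \<subseteq> Pow Z" unfolding F0_def by auto
    show "{} \<notin> F0" unfolding F0_def using B(3) by auto
  next
    fix a b assume "a \<in> F0" "b \<in> F0"
    then obtain a1 b1 where "a1 \<in> B" "b1 \<in> B" "a1 \<subseteq> a" "b1 \<subseteq> b" "a \<subseteq> Z" "b \<subseteq> Z" unfolding F0_def by auto
    moreover obtain c where "c \<in> B" "c \<subseteq> a1 \<inter> b1" using B(4)[OF \<open>a1 \<in> B\<close> \<open>b1 \<in> B\<close>] by auto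
    ultimately have "c \<subseteq> a \<inter> b" "a \<inter> b \<subseteq> Z" "c \<in> B" by blast+
    then show "a \<inter> b \<in> F0" unfolding F0_def by blast
  next
    fix a c assume "a \<in> F0" "a \<subseteq> c" "c \<subseteq> Z" then show "c \<in> F0" unfolding F0_def by (blast intro: order_trans)
  qed
  then have F0A: "F0 \<in> \<A>" unfolding \<A>_def by simp
  have "\<exists>M\<in>\<A>. \<forall>X\<in>\<A>. M \<subseteq> X \<longrightarrow> X = M"
  proof (rule subset_Zorn_nonempty)
    show "\<A> \<noteq> {}" using F0A by auto
  next
    fix C assume C: "C \<noteq> {}" "subset.chain \<A> C"
    have ch: "\<And>F G. F \<in> C \<Longrightarrow> G \<in> C \<Longrightarrow> F \<subseteq> G \<or> G \<subseteq> F"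
      using C(2) unfolding subset.chain_def by blast
    have CA: "\<And>F. F \<in> C \<Longrightarrow> F \<in> \<A>" using C(2) unfolding subset.chain_def by blast
    have CF: "\<And>F. F \<in> C \<Longrightarrow> filt Z F" using CA unfolding \<A>_def by simp
    have CF0: "\<And>F. F \<in> C \<Longrightarrow> F0 \<subseteq> F" using CA unfolding \<A>_def by simp
    have "filt Z (\<Union>C)"
    proof (rule filtI)
      show "\<Union>C \<subseteq> Pow Z" using CF filtD1 by blast
      show "{} \<notin> \<Union>C" using CF filtD2 by blast
    next
      fix a b assume "a \<in> \<Union>C" "b \<in> \<Union>C"
      then obtain F G where FG: "F \<in> C" "G \<in> C" "a \<in> F" "b \<in> G" by auto
      show "a \<inter> b \<in> \<Union>C"
      proof (cases "F \<subseteq> G")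
        case True
        then have "a \<inter> b \<in> G" using filtD3[OF CF[OF FG(2)]] FG by auto
        then show ?thesis using FG by auto
      next
        case False
        then have "G \<subseteq> F" using ch FG by blast
        then have "a \<inter> b \<in> F" using filtD3[OF CF[OF FG(1)]] FG by auto
        then show ?thesis using FG by auto
      qed
    next
      fix a c assume "a \<in> \<Union>C" "a \<subseteq> c" "c \<subseteq> Z"
      then obtain F where "F \<in> C" "a \<in> F" by auto
      then have "c \<in> F" using filtD4[OF CF[OF \<open>F \<in> C\<close>]] \<open>a \<subseteq> c\<close> \<open>c \<subseteq> Z\<close> by auto
      then show "c \<in> \<Union>C" using \<open>F \<in> C\<close> by auto
    qed
    moreover obtain F where "F \<in> C" using C(1) by auto
    then have "F0 \<subseteq> \<Union>C" using CF0 by auto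
    ultimately show "\<Union>C \<in> \<A>" unfolding \<A>_def by simp
  qed
  then obtain U where UA: "U \<in> \<A>" and max: "\<And>X. X \<in> \<A> \<Longrightarrow> U \<subseteq> X \<Longrightarrow> X = U" by blast
  have fU: "filt Z U" and F0U: "F0 \<subseteq> U" using UA unfolding \<A>_def by auto
  have BF0: "B \<subseteq> F0" unfolding F0_def using B(1) by auto
  obtain b0 where "b0 \<in> B" using B(2) by auto
  then have "Z \<in> F0" unfolding F0_def using B(1) by auto
  then have ZU: "Z \<in> U" using F0U by auto
  have "ultrafilter_on Z U"
    unfolding ultrafilter_on_def
  proof (intro conjI allI impI ballI)
    show "U \<subseteq> Pow Z" using filtD1[OF fU] by auto
    show "{} \<notin> U" using filtD2[OF fU] .
    show "Z \<in> U" by fact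
  next
    fix Y Z' assume "Y \<in> U" "Z' \<in> U" then show "Y \<inter> Z' \<in> U" using filtD3[OF fU] by auto
  next
    fix Y Z' assume "Y \<in> U" "Y \<subseteq> Z' \<and> Z' \<subseteq> Z" then show "Z' \<in> U" using filtD4[OF fU] by auto
  next
    fix Y assume Y: "Y \<subseteq> Z"
    show "Y \<in> U \<or> Z - Y \<in> U"
    proof (cases "\<exists>a\<in>U. a \<inter> Y = {}")
      case True
      then obtain a where "a \<in> U" "a \<inter> Y = {}" by auto
      moreover then have "a \<subseteq> Z - Y" using filtD1[OF fU] by auto
      ultimately have "Z - Y \<in> U" using filtD4[OF fU] by auto
      then show ?thesis by simp
    next
      case False
      define U' where "U' = {c. c \<subseteq> Z \<and> (\<exists>a\<in>U. a \<inter> Y \<subseteq> c)}"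
      have "filt Z U'"
      proof (rule filtI)
        show "U' \<subseteq> Pow Z" unfolding U'_def by auto
        show "{} \<notin> U'" using False unfolding U'_def by auto
      next
        fix a b assume "a \<in> U'" "b \<in> U'"
        then obtain a1 b1 where "a1 \<in> U" "b1 \<in> U" "a1 \<inter> Y \<subseteq> a" "b1 \<inter> Y \<subseteq> b" "a \<subseteq> Z" "b \<subseteq> Z"
          unfolding U'_def by auto
        moreover then have "a1 \<inter> b1 \<in> U" using filtD3[OF fU] by auto
        ultimately show "a \<inter> b \<in> U'" unfolding U'_def by (intro CollectI conjI bexI[of _ "a1 \<inter> b1"]) auto
      next
        fix a c assume "a \<in> U'" "a \<subseteq> c" "c \<subseteq> Z" then show "c \<in> U'" unfolding U'_def by (blast intro: order_trans)
      qed
      moreover have "U \<subseteq> U'"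
      proof
        fix a assume "a \<in> U" then show "a \<in> U'" unfolding U'_def using filtD1[OF fU] by auto
      qed
      moreover have "F0 \<subseteq> U'" using F0U \<open>U \<subseteq> U'\<close> by auto
      ultimately have "U' = U" using max unfolding \<A>_def by auto
      moreover have "Y \<in> U'" unfolding U'_def using Y ZU by auto
      ultimately show ?thesis by simp
    qed
  qed
  then show ?thesis using BF0 F0U by blast
qed

section \<open>Boolean algebras\<close>

lemma gen_ba_sub: assumes "Gs \<subseteq> Pow X" "S \<in> gen_ba X Gs" shows "S \<subseteq> X"
  using assms(2) by (induction rule: gen_ba.induct) (use assms(1) in auto)

lemma gen_ba_int: "Gs \<subseteq> Pow X \<Longrightarrow> S \<in> gen_ba X Gs \<Longrightarrow> T \<in> gen_ba X Gs \<Longrightarrow> S \<inter> T \<in> gen_ba X Gs"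
proof -
  assume g: "Gs \<subseteq> Pow X" and s: "S \<in> gen_ba X Gs" and t: "T \<in> gen_ba X Gs"
  have "X - ((X - S) \<union> (X - T)) \<in> gen_ba X Gs" by (intro gen_ba.intros s t)
  moreover have "X - ((X - S) \<union> (X - T)) = S \<inter> T" using gen_ba_sub[OF g s] gen_ba_sub[OF g t] by blast
  ultimately show ?thesis by simp
qed

lemma gen_ba_empty: "{} \<in> gen_ba X Gs"
proof -
  have "X - X \<in> gen_ba X Gs" by (intro gen_ba.intros)
  then show ?thesis by simp
qed

lemma gen_ba_Union: "finite F \<Longrightarrow> (\<forall>S\<in>F. S \<in> gen_ba X Gs) \<Longrightarrow> \<Union>F \<in> gen_ba X Gs"
  by (induction F rule: finite_induct) (auto intro: gen_ba.intros gen_ba_empty)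

lemma gen_ba_atom:
  assumes g: "Gs \<subseteq> Pow X" and f: "finite C" and c: "C \<subseteq> gen_ba X Gs"
  shows "D \<subseteq> C \<Longrightarrow> {z\<in>X. \<forall>c\<in>C. z \<in> c \<longleftrightarrow> c \<in> D} \<in> gen_ba X Gs"
  using f c
proof (induction C arbitrary: D)
  case empty then show ?case by (simp add: gen_ba.top)
next
  case (insert c C)
  have DC: "D - {c} \<subseteq> C" using insert.prems insert.hyps by auto
  have IH: "{z\<in>X. \<forall>d\<in>C. z \<in> d \<longleftrightarrow> d \<in> D - {c}} \<in> gen_ba X Gs"
    using insert.IH[OF DC] insert.prems by simp
  have cg: "c \<in> gen_ba X Gs" using insert by auto
  have cx: "c \<subseteq> X" using gen_ba_sub[OF g cg] .
  show ?case
  proof (cases "c \<in> D")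
    case True
    have "{z\<in>X. \<forall>c'\<in>insert c C. z \<in> c' \<longleftrightarrow> c' \<in> D} = {z\<in>X. \<forall>d\<in>C. z \<in> d \<longleftrightarrow> d \<in> D - {c}} \<inter> c"
      using True insert.hyps(2) cx by auto
    then show ?thesis using gen_ba_int[OF g IH cg] by simp
  next
    case False
    have cc: "X - c \<in> gen_ba X Gs" using cg by (rule gen_ba.compl)
    have "{z\<in>X. \<forall>c'\<in>insert c C. z \<in> c' \<longleftrightarrow> c' \<in> D} = {z\<in>X. \<forall>d\<in>C. z \<in> d \<longleftrightarrow> d \<in> D - {c}} \<inter> (X - c)"
      using False insert.hyps(2) by auto
    then show ?thesis using gen_ba_int[OF g IH cc] by simp
  qed
qed

lemma gen_ba_sep:
  assumes g: "Gs \<subseteq> Pow X" and f: "finite C" and c: "C \<subseteq> gen_ba X Gs"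
    and s: "S \<subseteq> X" and ns: "S \<notin> gen_ba X Gs"
  shows "\<exists>x\<in>S. \<exists>y\<in>X - S. \<forall>c\<in>C. x \<in> c \<longleftrightarrow> y \<in> c"
proof (rule ccontr)
  assume na: "\<not> ?thesis"
  define at where "at D = {z\<in>X. \<forall>c\<in>C. z \<in> c \<longleftrightarrow> c \<in> D}" for D
  have "S = \<Union>{at D | D. D \<subseteq> C \<and> at D \<subseteq> S}"
  proof
    show "S \<subseteq> \<Union>{at D | D. D \<subseteq> C \<and> at D \<subseteq> S}"
    proof
      fix z assume z: "z \<in> S"
      define D where "D = {c\<in>C. z \<in> c}"
      have "z \<in> at D" using z s unfolding at_def D_def by auto
      moreover have "at D \<subseteq> S"
      proof
        fix w assume w: "w \<in> at D"
        show "w \<in> S"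
        proof (rule ccontr)
          assume "w \<notin> S"
          then have "w \<in> X - S" using w unfolding at_def by auto
          moreover have "\<forall>c\<in>C. z \<in> c \<longleftrightarrow> w \<in> c" using w unfolding at_def D_def by auto
          ultimately show False using na z by blast
        qed
      qed
      moreover have "D \<subseteq> C" unfolding D_def by auto
      ultimately show "z \<in> \<Union>{at D | D. D \<subseteq> C \<and> at D \<subseteq> S}" by blast
    qed
  next
    show "\<Union>{at D | D. D \<subseteq> C \<and> at D \<subseteq> S} \<subseteq> S" by blast
  qed
  moreover have "\<Union>{at D | D. D \<subseteq> C \<and> at D \<subseteq> S} \<in> gen_ba X Gs"
  proof (rule gen_ba_Union)
    have "{at D | D. D \<subseteq> C \<and> at D \<subseteq> S} \<subseteq> at ` Pow C" by auto
    then show "finite {at D | D. D \<subseteq> C \<and> at D \<subseteq> S}" using f finite_subset by blast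
    show "\<forall>S\<in>{at D | D. D \<subseteq> C \<and> at D \<subseteq> S}. S \<in> gen_ba X Gs"
    proof
      fix S' assume "S' \<in> {at D | D. D \<subseteq> C \<and> at D \<subseteq> S}"
      then obtain D where "D \<subseteq> C" "S' = at D" by blast
      then show "S' \<in> gen_ba X Gs" using gen_ba_atom[OF g f c, of D] unfolding at_def by simp
    qed
  qed
  ultimately show False using ns by metis
qed




lemma pres_comp: "preserves R B f \<Longrightarrow> preserves R C g \<Longrightarrow> f ` B \<subseteq> C \<Longrightarrow> preserves R B (g \<circ> f)"
  unfolding preserves_def
proof (intro allI impI)
  fix r xs assume pf: "\<forall>r xs. set xs \<subseteq> B \<longrightarrow> R r (map f xs) = R r xs"
    and pg: "\<forall>r xs. set xs \<subseteq> C \<longrightarrow> R r (map g xs) = R r xs" and fb: "f ` B \<subseteq> C" and xs: "set xs \<subseteq> B"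
  have "set (map f xs) \<subseteq> C" using xs fb by auto
  then have "R r (map g (map f xs)) = R r (map f xs)" using pg by blast
  then show "R r (map (g \<circ> f) xs) = R r xs" using pf xs by simp
qed

lemma pres_cong: "preserves R B f \<Longrightarrow> (\<And>x. x \<in> B \<Longrightarrow> f x = g x) \<Longrightarrow> preserves R B g"
  unfolding preserves_def
proof (intro allI impI)
  fix r xs assume pf: "\<forall>r xs. set xs \<subseteq> B \<longrightarrow> R r (map f xs) = R r xs"
    and e: "\<And>x. x \<in> B \<Longrightarrow> f x = g x" and xs: "set xs \<subseteq> B"
  have "map f xs = map g xs" using xs e by (intro map_cong) auto
  then show "R r (map g xs) = R r xs" using pf xs by metis
qed

lemma pres_mono: "preserves R B f \<Longrightarrow> C \<subseteq> B \<Longrightarrow> preserves R C f"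
  unfolding preserves_def by blast

lemma pres_id: "preserves R B id"
  unfolding preserves_def by simp

lemma rr_comp: "y ` C \<subseteq> B \<Longrightarrow> restrict (restrict f B \<circ> y) C = restrict (f \<circ> y) C"
  by (intro restrict_ext) auto

lemma rr_comp2: "restrict (f \<circ> restrict y C) C = restrict (f \<circ> y) C"
  by (intro restrict_ext) auto

locale fr =
  fixes V :: "'a set" and R :: "'r \<Rightarrow> 'a list \<Rightarrow> bool" and A :: "nat \<Rightarrow> 'a set"
  assumes uh: "ultrahomogeneous V R" and exh: "exhaustion V A"
begin

abbreviation HH where "HH n \<equiv> H V R A n"
abbreviation SS where "SS \<equiv> SG V R A"
abbreviation GG where "GG \<equiv> Aut V R"
abbreviation iu where "iu n m T \<equiv> iup V R A n m T"

lemma A_Suc: "A n \<subseteq> A (Suc n)" using exh unfolding exhaustion_def by blast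
lemma A_mono: "m \<le> n \<Longrightarrow> A m \<subseteq> A n" using lift_Suc_mono_le[of A, OF A_Suc] by blast
lemma A_V: "A n \<subseteq> V" using exh unfolding exhaustion_def by blast
lemma A_fin: "finite (A n)" using exh unfolding exhaustion_def by blast
lemma V_cover: "x \<in> V \<Longrightarrow> \<exists>n. x \<in> A n" using exh unfolding exhaustion_def by blast

lemma cover: "finite F \<Longrightarrow> F \<subseteq> V \<Longrightarrow> \<exists>N. F \<subseteq> A N"
proof (induction F rule: finite_induct)
  case empty then show ?case by auto
next
  case (insert x F)
  then obtain N where N: "F \<subseteq> A N" by auto
  obtain n where n: "x \<in> A n" using V_cover insert.prems by auto
  have "F \<subseteq> A (max N n)" "x \<in> A (max N n)" using N n A_mono[of N "max N n"] A_mono[of n "max N n"] by auto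
  then show ?case by blast
qed

lemma HH_iff: "x \<in> HH n \<longleftrightarrow> x \<in> extensional (A n) \<and> x ` A n \<subseteq> V \<and> inj_on x (A n) \<and> preserves R (A n) x"
  unfolding H_def Emb_def is_emb_def by blast

lemma Aut_iff: "g \<in> GG \<longleftrightarrow> g \<in> extensional V \<and> bij_betw g V V \<and> preserves R V g"
  unfolding Aut_def by blast

lemma comp_HH: "x \<in> HH N \<Longrightarrow> y ` A m \<subseteq> A N \<Longrightarrow> inj_on y (A m) \<Longrightarrow> preserves R (A m) y
   \<Longrightarrow> restrict (x \<circ> y) (A m) \<in> HH m"
proof -
  assume x: "x \<in> HH N" and y: "y ` A m \<subseteq> A N" "inj_on y (A m)" "preserves R (A m) y"
  have xi: "x ` A N \<subseteq> V" "inj_on x (A N)" "preserves R (A N) x" using x unfolding HH_iff by auto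
  have "(restrict (x \<circ> y) (A m)) ` A m = x ` y ` A m" by auto
  also have "\<dots> \<subseteq> V" using xi y by auto
  finally have 1: "(restrict (x \<circ> y) (A m)) ` A m \<subseteq> V" .
  have "inj_on (x \<circ> y) (A m)" using y xi by (intro comp_inj_on) (auto intro: inj_on_subset)
  then have 2: "inj_on (restrict (x \<circ> y) (A m)) (A m)" by (simp add: inj_on_def)
  have "preserves R (A m) (x \<circ> y)" using pres_comp[OF y(3) xi(3) y(1)] .
  then have 3: "preserves R (A m) (restrict (x \<circ> y) (A m))" by (rule pres_cong) auto
  show ?thesis unfolding HH_iff using 1 2 3 by auto
qed

lemma HH_inj: "y \<in> HH m \<Longrightarrow> inj_on y (A m)" unfolding HH_iff by auto
lemma HH_pres: "y \<in> HH m \<Longrightarrow> preserves R (A m) y" unfolding HH_iff by auto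
lemma HH_ext: "y \<in> HH m \<Longrightarrow> y \<in> extensional (A m)" unfolding HH_iff by auto
lemma HH_V: "y \<in> HH m \<Longrightarrow> y ` A m \<subseteq> V" unfolding HH_iff by auto

lemma Aut_bij: "g \<in> GG \<Longrightarrow> bij_betw g V V" unfolding Aut_iff by blast
lemma Aut_inj: "B \<subseteq> V \<Longrightarrow> g \<in> GG \<Longrightarrow> inj_on g B"
  by (rule inj_on_subset[OF bij_betw_imp_inj_on[OF Aut_bij]])
lemma Aut_pres: "g \<in> GG \<Longrightarrow> preserves R (A m) g"
proof -
  assume "g \<in> GG" then have "preserves R V g" unfolding Aut_iff by blast
  then show ?thesis by (rule pres_mono) (rule A_V)
qed
lemma Aut_V: "B \<subseteq> V \<Longrightarrow> g \<in> GG \<Longrightarrow> g ` B \<subseteq> V"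
  using bij_betw_imp_surj_on[OF Aut_bij] by blast

lemma comp_HH1: assumes "x \<in> HH N" "y \<in> HH m" "y ` A m \<subseteq> A N" shows "restrict (x \<circ> y) (A m) \<in> HH m"
  by (rule comp_HH[OF assms(1,3) HH_inj[OF assms(2)] HH_pres[OF assms(2)]])

lemma comp_HH2: assumes "x \<in> HH N" "g \<in> GG" "g ` A m \<subseteq> A N" shows "restrict (x \<circ> g) (A m) \<in> HH m"
  by (rule comp_HH[OF assms(1,3) Aut_inj[OF A_V assms(2)] Aut_pres[OF assms(2)]])

lemma restr_HH: "x \<in> HH n \<Longrightarrow> m \<le> n \<Longrightarrow> restrict x (A m) \<in> HH m"
proof -
  assume "x \<in> HH n" "m \<le> n"
  then have "restrict (x \<circ> id) (A m) \<in> HH m"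
    using comp_HH[of x n id m] A_mono[of m n] pres_id[of R "A m"] by simp
  then show ?thesis by simp
qed

lemma G_HH: "g \<in> GG \<Longrightarrow> restrict g (A n) \<in> HH n"
proof -
  assume g: "g \<in> GG"
  have "restrict g (A n) ` A n \<subseteq> V" using Aut_V[OF A_V g] by auto
  moreover have "inj_on (restrict g (A n)) (A n)" using Aut_inj[OF A_V g] by (simp add: inj_on_def)
  moreover have "preserves R (A n) (restrict g (A n))" using Aut_pres[OF g] by (rule pres_cong) auto
  ultimately show ?thesis unfolding HH_iff by auto
qed

lemma Gcomp_HH: "g \<in> GG \<Longrightarrow> y \<in> HH n \<Longrightarrow> restrict (g \<circ> y) (A n) \<in> HH n"
proof -
  assume g: "g \<in> GG" and y: "y \<in> HH n"
  have yv: "y ` A n \<subseteq> V" using HH_V[OF y] .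
  have "restrict (g \<circ> y) (A n) ` A n = g ` y ` A n" by auto
  also have "\<dots> \<subseteq> V" using Aut_V[OF yv g] .
  finally have 1: "restrict (g \<circ> y) (A n) ` A n \<subseteq> V" .
  have "inj_on (g \<circ> y) (A n)" using HH_inj[OF y] Aut_inj[OF yv g] by (intro comp_inj_on)
  then have 2: "inj_on (restrict (g \<circ> y) (A n)) (A n)" by (simp add: inj_on_def)
  have pg: "preserves R V g" using g unfolding Aut_iff by auto
  have "preserves R (A n) (g \<circ> y)" using pres_comp[OF HH_pres[OF y] pg yv] .
  then have 3: "preserves R (A n) (restrict (g \<circ> y) (A n))" by (rule pres_cong) auto
  show ?thesis unfolding HH_iff using 1 2 3 by auto
qed

definition idV where "idV = restrict id V"

lemma idV_G: "idV \<in> GG"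
proof -
  have "bij_betw idV V V" unfolding idV_def by (rule bij_betw_imageI) (auto simp: inj_on_def)
  moreover have "preserves R V idV" unfolding idV_def by (rule pres_cong[OF pres_id]) auto
  ultimately show ?thesis unfolding Aut_iff idV_def by auto
qed

lemma idV_comp: "y \<in> HH n \<Longrightarrow> restrict (idV \<circ> y) (A n) = y"
proof -
  assume y: "y \<in> HH n"
  have "restrict (idV \<circ> y) (A n) = restrict y (A n)"
    using HH_V[OF y] unfolding idV_def by (intro restrict_ext) auto
  also have "\<dots> = y" using HH_ext[OF y] by (rule extensional_restrict)
  finally show ?thesis .
qed

lemma comp_idV: "y \<in> HH n \<Longrightarrow> restrict (y \<circ> idV) (A n) = y"
proof -
  assume y: "y \<in> HH n"
  have "restrict (y \<circ> idV) (A n) = restrict y (A n)"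
    using A_V unfolding idV_def by (intro restrict_ext) auto
  also have "\<dots> = y" using HH_ext[OF y] by (rule extensional_restrict)
  finally show ?thesis .
qed

lemma idV_A: "idV ` A n \<subseteq> A n" using A_V unfolding idV_def by auto

lemma EXT: "x \<in> HH n \<Longrightarrow> \<exists>g\<in>GG. restrict g (A n) = x"
proof -
  assume x: "x \<in> HH n"
  have "bij_betw x (A n) (x ` A n)" using HH_inj[OF x] by (rule bij_betw_imageI) simp
  have u: "\<forall>A B f. finite A \<and> A \<subseteq> V \<and> B \<subseteq> V \<and> bij_betw f A B \<and> preserves R A f
        \<longrightarrow> (\<exists>g\<in>Aut V R. \<forall>x\<in>A. g x = f x)" using uh unfolding ultrahomogeneous_def .
  have "finite (A n) \<and> A n \<subseteq> V \<and> x ` A n \<subseteq> V \<and> bij_betw x (A n) (x ` A n) \<and> preserves R (A n) x"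
    using HH_V[OF x] HH_pres[OF x] A_fin A_V \<open>bij_betw x (A n) (x ` A n)\<close> by blast
  then obtain g where g: "g \<in> GG" "\<forall>a\<in>A n. g a = x a"
    using u[rule_format, of "A n" "x ` A n" x] by blast
  have "restrict g (A n) = restrict x (A n)" using g by (intro restrict_ext) auto
  also have "\<dots> = x" using HH_ext[OF x] by (rule extensional_restrict)
  finally show ?thesis using g by blast
qed

lemma HH_cover: "y \<in> HH m \<Longrightarrow> \<exists>N. y ` A m \<subseteq> A N"
  using cover[of "y ` A m"] A_fin HH_V by blast

lemma G_cover: "g \<in> GG \<Longrightarrow> \<exists>N. g ` A m \<subseteq> A N"
  using cover[of "g ` A m"] A_fin Aut_V[OF A_V] by blast

lemma rr: "m \<le> n \<Longrightarrow> restrict (restrict f (A n)) (A m) = restrict f (A m)"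
  using A_mono by (simp add: Int_absorb1)

subsection \<open>S(G)\<close>

lemma SG_uf: "\<alpha> \<in> SS \<Longrightarrow> ultrafilter_on (HH n) (\<alpha> n)"
  unfolding SG_def by blast

lemma SG_coh: "\<alpha> \<in> SS \<Longrightarrow> m \<le> n \<Longrightarrow> X \<in> \<alpha> m \<longleftrightarrow> X \<subseteq> HH m \<and> iu n m X \<in> \<alpha> n"
proof -
  assume a: "\<alpha> \<in> SS" and mn: "m \<le> n"
  then have "\<alpha> m = push (HH n) (HH m) (\<lambda>x. restrict x (A m)) (\<alpha> n)" unfolding SG_def by blast
  then show ?thesis unfolding push_def iup_def by auto
qed

lemma SG_sub: "\<alpha> \<in> SS \<Longrightarrow> X \<in> \<alpha> n \<Longrightarrow> X \<subseteq> HH n"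
  using SG_uf uf_sub by blast

lemma SGI: "(\<And>n. ultrafilter_on (HH n) (\<alpha> n)) \<Longrightarrow>
   (\<And>m n X. m \<le> n \<Longrightarrow> X \<subseteq> HH m \<Longrightarrow> X \<in> \<alpha> m \<longleftrightarrow> iu n m X \<in> \<alpha> n) \<Longrightarrow> \<alpha> \<in> SS"
proof -
  assume u: "\<And>n. ultrafilter_on (HH n) (\<alpha> n)"
    and c: "\<And>m n X. m \<le> n \<Longrightarrow> X \<subseteq> HH m \<Longrightarrow> X \<in> \<alpha> m \<longleftrightarrow> iu n m X \<in> \<alpha> n"
  have "\<alpha> m = push (HH n) (HH m) (\<lambda>x. restrict x (A m)) (\<alpha> n)" if "m \<le> n" for m n
  proof
    show "\<alpha> m \<subseteq> push (HH n) (HH m) (\<lambda>x. restrict x (A m)) (\<alpha> n)"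
      using c[OF that] uf_sub[OF u] unfolding push_def iup_def by blast
    show "push (HH n) (HH m) (\<lambda>x. restrict x (A m)) (\<alpha> n) \<subseteq> \<alpha> m"
      using c[OF that] unfolding push_def iup_def by blast
  qed
  then show ?thesis unfolding SG_def using u by blast
qed

lemma iu_sub: "iu n m X \<subseteq> HH n" unfolding iup_def by auto

lemma iu_mem: "s \<in> iu n m X \<longleftrightarrow> s \<in> HH n \<and> restrict s (A m) \<in> X" unfolding iup_def by auto

end



lemma uf_int_iff: "ultrafilter_on X U \<Longrightarrow> Y \<subseteq> X \<Longrightarrow> Z \<subseteq> X \<Longrightarrow> (Y \<inter> Z \<in> U \<longleftrightarrow> Y \<in> U \<and> Z \<in> U)"
proof -
  assume u: "ultrafilter_on X U" and y: "Y \<subseteq> X" and z: "Z \<subseteq> X"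
  show ?thesis
  proof
    assume a: "Y \<inter> Z \<in> U"
    have "Y \<inter> Z \<subseteq> Y" "Y \<inter> Z \<subseteq> Z" by auto
    then show "Y \<in> U \<and> Z \<in> U" using uf_mono[OF u a] y z by blast
  next
    assume "Y \<in> U \<and> Z \<in> U" then show "Y \<inter> Z \<in> U" using uf_int[OF u] by blast
  qed
qed

context fr begin

definition Qs where "Qs m T y N = {x \<in> HH N. restrict (x \<circ> y) (A m) \<in> T}"

lemma Qs_mem: "x \<in> Qs m T y N \<longleftrightarrow> x \<in> HH N \<and> restrict (x \<circ> y) (A m) \<in> T"
  unfolding Qs_def by simp
lemma Qs_sub: "Qs m T y N \<subseteq> HH N" unfolding Qs_def by auto

lemma Qs_up: assumes y: "y ` A m \<subseteq> A N" and NN: "N \<le> N'"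
  shows "Qs m T y N' = iu N' N (Qs m T y N)"
proof (intro set_eqI iffI)
  fix x assume "x \<in> Qs m T y N'"
  then have x: "x \<in> HH N'" "restrict (x \<circ> y) (A m) \<in> T" by (simp_all add: Qs_mem)
  have "restrict x (A N) \<in> HH N" by (rule restr_HH[OF x(1) NN])
  moreover have "restrict (restrict x (A N) \<circ> y) (A m) = restrict (x \<circ> y) (A m)" by (rule rr_comp[OF y])
  ultimately show "x \<in> iu N' N (Qs m T y N)" using x by (simp add: iu_mem Qs_mem)
next
  fix x assume "x \<in> iu N' N (Qs m T y N)"
  then have x: "x \<in> HH N'" "restrict (restrict x (A N) \<circ> y) (A m) \<in> T" by (simp_all add: iu_mem Qs_mem)
  have "restrict (restrict x (A N) \<circ> y) (A m) = restrict (x \<circ> y) (A m)" by (rule rr_comp[OF y])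
  then show "x \<in> Qs m T y N'" using x by (simp add: Qs_mem)
qed

lemma Qs_lev: "p \<in> SS \<Longrightarrow> y ` A m \<subseteq> A N \<Longrightarrow> N \<le> N' \<Longrightarrow> Qs m T y N \<in> p N \<longleftrightarrow> Qs m T y N' \<in> p N'"
  using SG_coh[of p N N' "Qs m T y N"] Qs_sub[of m T y N] Qs_up[of y m N N' T] by simp

lemma Qs_any: "p \<in> SS \<Longrightarrow> y ` A m \<subseteq> A N \<Longrightarrow> y ` A m \<subseteq> A N' \<Longrightarrow> Qs m T y N \<in> p N \<longleftrightarrow> Qs m T y N' \<in> p N'"
  using Qs_lev[of p y m N "max N N'" T] Qs_lev[of p y m N' "max N N'" T] by simp

lemma Qs_int: "Qs m (T \<inter> T') y N = Qs m T y N \<inter> Qs m T' y N" unfolding Qs_def by auto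
lemma Qs_mono: "T \<subseteq> T' \<Longrightarrow> Qs m T y N \<subseteq> Qs m T' y N" unfolding Qs_def by auto
lemma Qs_compl: assumes "y \<in> HH m" "y ` A m \<subseteq> A N" shows "Qs m (HH m - T) y N = HH N - Qs m T y N"
proof (intro set_eqI)
  fix x show "x \<in> Qs m (HH m - T) y N \<longleftrightarrow> x \<in> HH N - Qs m T y N"
  proof (cases "x \<in> HH N")
    case True
    have "restrict (x \<circ> y) (A m) \<in> HH m" by (rule comp_HH1[OF True assms])
    then show ?thesis using True by (simp add: Qs_mem)
  qed (simp add: Qs_mem)
qed
lemma Qs_HH: assumes "y \<in> HH m" "y ` A m \<subseteq> A N" shows "Qs m (HH m) y N = HH N"
proof (intro set_eqI)
  fix x show "x \<in> Qs m (HH m) y N \<longleftrightarrow> x \<in> HH N"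
  proof (cases "x \<in> HH N")
    case True
    have "restrict (x \<circ> y) (A m) \<in> HH m" by (rule comp_HH1[OF True assms])
    then show ?thesis using True by (simp add: Qs_mem)
  qed (simp add: Qs_mem)
qed
lemma Qs_empty: "Qs m {} y N = {}" unfolding Qs_def by auto
lemma Qs_rg: "Qs m T (restrict g (A m)) N = Qs m T g N" unfolding Qs_def by (simp add: rr_comp2)

definition rmul where "rmul m T p = {y \<in> HH m. \<exists>N. y ` A m \<subseteq> A N \<and> Qs m T y N \<in> p N}"

lemma rmul_iff: assumes p: "p \<in> SS" and N: "y ` A m \<subseteq> A N"
  shows "y \<in> rmul m T p \<longleftrightarrow> y \<in> HH m \<and> Qs m T y N \<in> p N"
proof
  assume "y \<in> rmul m T p"
  then obtain N' where "y \<in> HH m" "y ` A m \<subseteq> A N'" "Qs m T y N' \<in> p N'" unfolding rmul_def by blast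
  then show "y \<in> HH m \<and> Qs m T y N \<in> p N" using Qs_any[OF p N, of N' T] by blast
next
  assume "y \<in> HH m \<and> Qs m T y N \<in> p N" then show "y \<in> rmul m T p" unfolding rmul_def using N by blast
qed

lemma rmul_sub: "rmul m T p \<subseteq> HH m" unfolding rmul_def by auto

lemma rmul_ext:
  assumes "\<And>y N. y \<in> HH m \<Longrightarrow> y ` A m \<subseteq> A N \<Longrightarrow> y \<in> X \<longleftrightarrow> y \<in> Y" "X \<subseteq> HH m" "Y \<subseteq> HH m"
  shows "X = Y"
proof (intro set_eqI)
  fix y show "y \<in> X \<longleftrightarrow> y \<in> Y"
  proof (cases "y \<in> HH m")
    case True
    then obtain N where "y ` A m \<subseteq> A N" using HH_cover by blast
    then show ?thesis using assms(1) True by blast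
  next
    case False then show ?thesis using assms(2,3) by blast
  qed
qed

lemma rmul_int: assumes p: "p \<in> SS" shows "rmul m (T \<inter> T') p = rmul m T p \<inter> rmul m T' p"
proof (rule rmul_ext)
  fix y N assume y: "y \<in> HH m" and N: "y ` A m \<subseteq> A N"
  have "Qs m T y N \<inter> Qs m T' y N \<in> p N \<longleftrightarrow> Qs m T y N \<in> p N \<and> Qs m T' y N \<in> p N"
    using uf_int_iff[OF SG_uf[OF p] Qs_sub Qs_sub] .
  then show "y \<in> rmul m (T \<inter> T') p \<longleftrightarrow> y \<in> rmul m T p \<inter> rmul m T' p"
    using rmul_iff[OF p N] y Qs_int by simp
qed (use rmul_sub in auto)

lemma rmul_compl: assumes p: "p \<in> SS" shows "rmul m (HH m - T) p = HH m - rmul m T p"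
proof (rule rmul_ext)
  fix y N assume y: "y \<in> HH m" and N: "y ` A m \<subseteq> A N"
  have "HH N - Qs m T y N \<in> p N \<longleftrightarrow> Qs m T y N \<notin> p N"
    using uf_compl[OF SG_uf[OF p] Qs_sub] .
  then show "y \<in> rmul m (HH m - T) p \<longleftrightarrow> y \<in> HH m - rmul m T p"
    using rmul_iff[OF p N] y Qs_compl[OF y N] by simp
qed (use rmul_sub in auto)

lemma rmul_HH: assumes p: "p \<in> SS" shows "rmul m (HH m) p = HH m"
proof (rule rmul_ext)
  fix y N assume y: "y \<in> HH m" and N: "y ` A m \<subseteq> A N"
  show "y \<in> rmul m (HH m) p \<longleftrightarrow> y \<in> HH m"
    using rmul_iff[OF p N] y Qs_HH[OF y N] uf_top[OF SG_uf[OF p]] by simp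
qed (use rmul_sub in auto)

lemma rmul_empty: assumes p: "p \<in> SS" shows "rmul m {} p = {}"
proof (rule rmul_ext)
  fix y N assume y: "y \<in> HH m" and N: "y ` A m \<subseteq> A N"
  show "y \<in> rmul m {} p \<longleftrightarrow> y \<in> {}"
    using rmul_iff[OF p N] y Qs_empty uf_empty[OF SG_uf[OF p]] by simp
qed (use rmul_sub in auto)

lemma rmul_mono: assumes p: "p \<in> SS" and TT: "T \<subseteq> T'" shows "rmul m T p \<subseteq> rmul m T' p"
proof
  fix y assume y: "y \<in> rmul m T p"
  then have yh: "y \<in> HH m" using rmul_sub by blast
  then obtain N where N: "y ` A m \<subseteq> A N" using HH_cover by blast
  have "Qs m T y N \<in> p N" using y rmul_iff[OF p N] by simp
  then have "Qs m T' y N \<in> p N" using uf_mono[OF SG_uf[OF p] _ Qs_mono[OF TT] Qs_sub] by blast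
  then show "y \<in> rmul m T' p" using rmul_iff[OF p N] yh by simp
qed

lemma rmul_iup: assumes p: "p \<in> SS" and mn: "m \<le> n"
  shows "rmul n (iu n m T) p = iu n m (rmul m T p)"
proof (rule rmul_ext)
  fix y N assume y: "y \<in> HH n" and N: "y ` A n \<subseteq> A N"
  define y' where "y' = restrict y (A m)"
  have y'h: "y' \<in> HH m" unfolding y'_def by (rule restr_HH[OF y mn])
  have y'N: "y' ` A m \<subseteq> A N" unfolding y'_def using N A_mono[OF mn] by auto
  have "Qs n (iu n m T) y N = Qs m T y' N"
  proof (intro set_eqI)
    fix x show "x \<in> Qs n (iu n m T) y N \<longleftrightarrow> x \<in> Qs m T y' N"
    proof (cases "x \<in> HH N")
      case True
      have "restrict (x \<circ> y) (A n) \<in> HH n" by (rule comp_HH1[OF True y N])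
      moreover have "restrict (restrict (x \<circ> y) (A n)) (A m) = restrict (x \<circ> y) (A m)" by (rule rr[OF mn])
      moreover have "restrict (x \<circ> y') (A m) = restrict (x \<circ> y) (A m)" unfolding y'_def by (rule rr_comp2)
      ultimately show ?thesis using True by (simp add: Qs_mem iu_mem)
    next
      case False then show ?thesis by (simp add: Qs_mem)
    qed
  qed
  then show "y \<in> rmul n (iu n m T) p \<longleftrightarrow> y \<in> iu n m (rmul m T p)"
    using rmul_iff[OF p N] rmul_iff[OF p y'N] y y'h unfolding iu_mem y'_def by simp
qed (use rmul_sub iu_sub in auto)

definition prod where "prod p \<alpha> = (\<lambda>n. {T. T \<subseteq> HH n \<and> rmul n T p \<in> \<alpha> n})"

lemma prod_mem: "T \<in> prod p \<alpha> n \<longleftrightarrow> T \<subseteq> HH n \<and> rmul n T p \<in> \<alpha> n"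
  unfolding prod_def by simp

lemma prod_uf: assumes p: "p \<in> SS" and a: "\<alpha> \<in> SS" shows "ultrafilter_on (HH n) (prod p \<alpha> n)"
proof -
  have u: "ultrafilter_on (HH n) (\<alpha> n)" by (rule SG_uf[OF a])
  show ?thesis unfolding ultrafilter_on_def
  proof (intro conjI ballI allI impI)
    show "prod p \<alpha> n \<subseteq> Pow (HH n)" by (auto simp: prod_mem)
    show "HH n \<in> prod p \<alpha> n" using rmul_HH[OF p] uf_top[OF u] by (simp add: prod_mem)
    show "{} \<notin> prod p \<alpha> n" using rmul_empty[OF p] uf_empty[OF u] by (simp add: prod_mem)
  next
    fix Y Z assume "Y \<in> prod p \<alpha> n" "Z \<in> prod p \<alpha> n"
    then show "Y \<inter> Z \<in> prod p \<alpha> n" using rmul_int[OF p] uf_int[OF u] by (auto simp: prod_mem)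
  next
    fix Y Z assume Y: "Y \<in> prod p \<alpha> n" and YZ: "Y \<subseteq> Z \<and> Z \<subseteq> HH n"
    then have "rmul n Y p \<in> \<alpha> n" by (simp add: prod_mem)
    then have "rmul n Z p \<in> \<alpha> n" using uf_mono[OF u _ rmul_mono[OF p] rmul_sub] YZ by blast
    then show "Z \<in> prod p \<alpha> n" using YZ by (simp add: prod_mem)
  next
    fix Y assume Y: "Y \<subseteq> HH n"
    have "rmul n Y p \<in> \<alpha> n \<or> HH n - rmul n Y p \<in> \<alpha> n" using uf_compl[OF u rmul_sub] by blast
    then show "Y \<in> prod p \<alpha> n \<or> HH n - Y \<in> prod p \<alpha> n" using Y rmul_compl[OF p] by (auto simp: prod_mem)
  qed
qed

lemma prod_SG: assumes p: "p \<in> SS" and a: "\<alpha> \<in> SS" shows "prod p \<alpha> \<in> SS"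
proof (rule SGI)
  show "ultrafilter_on (HH n) (prod p \<alpha> n)" for n by (rule prod_uf[OF p a])
next
  fix m n X assume mn: "m \<le> n" and X: "X \<subseteq> HH m"
  have "X \<in> prod p \<alpha> m \<longleftrightarrow> rmul m X p \<in> \<alpha> m" using X by (simp add: prod_mem)
  also have "\<dots> \<longleftrightarrow> iu n m (rmul m X p) \<in> \<alpha> n" using SG_coh[OF a mn] rmul_sub by blast
  also have "\<dots> \<longleftrightarrow> rmul n (iu n m X) p \<in> \<alpha> n" using rmul_iup[OF p mn] by simp
  also have "\<dots> \<longleftrightarrow> iu n m X \<in> prod p \<alpha> n" using iu_sub by (simp add: prod_mem)
  finally show "X \<in> prod p \<alpha> m \<longleftrightarrow> iu n m X \<in> prod p \<alpha> n" .
qed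

definition pr where "pr g = (\<lambda>n. {T. T \<subseteq> HH n \<and> restrict g (A n) \<in> T})"

lemma pr_mem: "T \<in> pr g n \<longleftrightarrow> T \<subseteq> HH n \<and> restrict g (A n) \<in> T" unfolding pr_def by simp

lemma pr_SG: assumes g: "g \<in> GG" shows "pr g \<in> SS"
proof (rule SGI)
  show "ultrafilter_on (HH n) (pr g n)" for n unfolding pr_def by (rule uf_principal[OF G_HH[OF g]])
next
  fix m n X assume mn: "m \<le> n" and X: "X \<subseteq> HH m"
  have "restrict (restrict g (A n)) (A m) = restrict g (A m)" by (rule rr[OF mn])
  then have "restrict g (A n) \<in> iu n m X \<longleftrightarrow> restrict g (A m) \<in> X" using G_HH[OF g] by (simp add: iu_mem)
  then show "X \<in> pr g m \<longleftrightarrow> iu n m X \<in> pr g n"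
    using X iu_sub by (simp add: pr_mem)
qed

lemma prod_pr: assumes p: "p \<in> SS" and g: "g \<in> GG" and N: "g ` A n \<subseteq> A N"
  shows "T \<in> prod p (pr g) n \<longleftrightarrow> T \<subseteq> HH n \<and> Qs n T g N \<in> p N"
proof -
  have N': "restrict g (A n) ` A n \<subseteq> A N" using N by auto
  have "T \<in> prod p (pr g) n \<longleftrightarrow> T \<subseteq> HH n \<and> restrict g (A n) \<in> rmul n T p"
    using rmul_sub by (auto simp: prod_mem pr_mem)
  also have "\<dots> \<longleftrightarrow> T \<subseteq> HH n \<and> Qs n T g N \<in> p N"
    using rmul_iff[OF p N'] G_HH[OF g] Qs_rg by simp
  finally show ?thesis .
qed

lemma act_prod: assumes a: "\<alpha> \<in> SS" and g: "g \<in> GG" shows "act V R A \<alpha> g = prod \<alpha> (pr g)"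
proof
  fix m
  define n0 where "n0 = (LEAST n. g ` A m \<subseteq> A n)"
  have N: "g ` A m \<subseteq> A n0" unfolding n0_def by (rule LeastI_ex) (rule G_cover[OF g])
  have "act V R A \<alpha> g m = {T. T \<subseteq> HH m \<and> Qs m T g n0 \<in> \<alpha> n0}"
    unfolding act_def push_def Qs_def Let_def n0_def by simp
  also have "\<dots> = prod \<alpha> (pr g) m" using prod_pr[OF a g N] by blast
  finally show "act V R A \<alpha> g m = prod \<alpha> (pr g) m" .
qed

lemma pr_idV: assumes p: "p \<in> SS" shows "prod p (pr idV) = p"
proof
  fix n
  have Q: "Qs n T idV n = T \<inter> HH n" for T unfolding Qs_def using comp_idV by auto
  show "prod p (pr idV) n = p n"
    using prod_pr[OF p idV_G idV_A] Q SG_sub[OF p] by (auto simp: Int_absorb2)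
qed

lemma QR: assumes p: "p \<in> SS" and yN: "y ` A m \<subseteq> A N" and yh: "\<And>x. x \<in> HH N \<Longrightarrow> restrict (x \<circ> y) (A m) \<in> HH m"
  shows "Qs m (rmul m T p) y N = rmul N (Qs m T y N) p"
proof (rule rmul_ext)
  fix x L assume x: "x \<in> HH N" and L: "x ` A N \<subseteq> A L"
  define y' where "y' = restrict (x \<circ> y) (A m)"
  have y'h: "y' \<in> HH m" unfolding y'_def by (rule yh[OF x])
  have y'L: "y' ` A m \<subseteq> A L" unfolding y'_def using yN L by auto
  have "Qs m T y' L = Qs N (Qs m T y N) x L"
  proof (intro set_eqI)
    fix z show "z \<in> Qs m T y' L \<longleftrightarrow> z \<in> Qs N (Qs m T y N) x L"
    proof (cases "z \<in> HH L")
      case True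
      have "restrict (z \<circ> x) (A N) \<in> HH N" by (rule comp_HH1[OF True x L])
      moreover have "restrict (restrict (z \<circ> x) (A N) \<circ> y) (A m) = restrict (z \<circ> x \<circ> y) (A m)"
        by (rule rr_comp[OF yN])
      moreover have "restrict (z \<circ> y') (A m) = restrict (z \<circ> x \<circ> y) (A m)"
        unfolding y'_def by (simp add: rr_comp2 o_assoc)
      ultimately show ?thesis using True by (simp add: Qs_mem)
    next
      case False then show ?thesis by (simp add: Qs_mem)
    qed
  qed
  then show "x \<in> Qs m (rmul m T p) y N \<longleftrightarrow> x \<in> rmul N (Qs m T y N) p"
    using rmul_iff[OF p y'L] rmul_iff[OF p L] x y'h unfolding Qs_mem y'_def by simp
qed (use Qs_sub rmul_sub in auto)

lemma KEY: assumes p: "p \<in> SS" and q: "q \<in> SS" shows "rmul m T (prod p q) = rmul m (rmul m T p) q"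
proof (rule rmul_ext)
  fix y N assume y: "y \<in> HH m" and N: "y ` A m \<subseteq> A N"
  have "Qs m (rmul m T p) y N = rmul N (Qs m T y N) p"
    using QR[OF p N] comp_HH1[OF _ y N] by blast
  then show "y \<in> rmul m T (prod p q) \<longleftrightarrow> y \<in> rmul m (rmul m T p) q"
    using rmul_iff[OF prod_SG[OF p q] N] rmul_iff[OF q N] y Qs_sub by (simp add: prod_mem)
qed (use rmul_sub in auto)

lemma assoc: assumes p: "p \<in> SS" and q: "q \<in> SS" and a: "\<alpha> \<in> SS"
  shows "prod p (prod q \<alpha>) = prod (prod p q) \<alpha>"
proof
  fix n show "prod p (prod q \<alpha>) n = prod (prod p q) \<alpha> n"
    using KEY[OF p q] rmul_sub by (auto simp: prod_mem)
qed

lemma act_SG: "\<alpha> \<in> SS \<Longrightarrow> g \<in> GG \<Longrightarrow> act V R A \<alpha> g \<in> SS"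
  using act_prod prod_SG pr_SG by simp

lemma prod_act: assumes p: "p \<in> SS" and a: "\<alpha> \<in> SS" and g: "g \<in> GG"
  shows "prod p (act V R A \<alpha> g) = act V R A (prod p \<alpha>) g"
  using act_prod[OF a g] act_prod[OF prod_SG[OF p a] g] assoc[OF p a pr_SG[OF g]] by simp

lemma rmul_pr: assumes g: "g \<in> GG" shows "rmul n T (pr g) = act2 V R A n T g"
proof (rule rmul_ext)
  fix y N assume y: "y \<in> HH n" and N: "y ` A n \<subseteq> A N"
  have "restrict (restrict g (A N) \<circ> y) (A n) = restrict (g \<circ> y) (A n)" by (rule rr_comp[OF N])
  then show "y \<in> rmul n T (pr g) \<longleftrightarrow> y \<in> act2 V R A n T g"
    using rmul_iff[OF pr_SG[OF g] N] y Qs_sub G_HH[OF g] unfolding act2_def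
    by (simp add: pr_mem Qs_mem)
qed (use rmul_sub in \<open>auto simp: act2_def\<close>)

lemma rmul_act: assumes q: "q \<in> SS" and g: "g \<in> GG"
  shows "act2 V R A n (rmul n T q) g = rmul n T (act V R A q g)"
  using act_prod[OF q g] KEY[OF q pr_SG[OF g]] rmul_pr[OF g] by simp

lemma rmul_e: "rmul n T (pr idV) = T \<inter> HH n"
  using rmul_pr[OF idV_G] idV_comp unfolding act2_def by auto

lemma act_e: assumes g: "g \<in> GG" shows "act V R A (pr idV) g = pr g"
proof
  fix n show "act V R A (pr idV) g n = pr g n"
    using act_prod[OF pr_SG[OF idV_G] g] rmul_e G_HH[OF g] by (auto simp: prod_mem pr_mem)
qed

end



context fr begin

abbreviation bas where "bas n X \<equiv> sg_basic V R A n X"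
abbreviation cl where "cl C \<equiv> sg_closed V R A C"
abbreviation cont where "cont \<phi> \<equiv> sg_continuous V R A \<phi>"

lemma bas_mem: "\<alpha> \<in> bas n X \<longleftrightarrow> \<alpha> \<in> SS \<and> X \<in> \<alpha> n" unfolding sg_basic_def by simp

lemma bas_open: "sg_open V R A (bas n X)"
  unfolding sg_open_def
proof (intro conjI ballI)
  show "bas n X \<subseteq> SS" by (auto simp: bas_mem)
  fix \<alpha> assume "\<alpha> \<in> bas n X"
  then have "X \<in> \<alpha> n" by (simp add: bas_mem)
  then show "\<exists>n' X'. X' \<in> \<alpha> n' \<and> bas n' X' \<subseteq> bas n X" by blast
qed

lemma closedI:
  assumes "C \<subseteq> SS" "\<And>\<alpha>. \<alpha> \<in> SS \<Longrightarrow> \<alpha> \<notin> C \<Longrightarrow> \<exists>n X. X \<in> \<alpha> n \<and> (\<forall>\<beta>\<in>SS. X \<in> \<beta> n \<longrightarrow> \<beta> \<notin> C)"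
  shows "cl C"
  unfolding sg_closed_def sg_open_def
proof (intro conjI ballI)
  show "C \<subseteq> SS" by fact
  show "SS - C \<subseteq> SS" by auto
  fix \<alpha> assume a: "\<alpha> \<in> SS - C"
  then obtain n X where "X \<in> \<alpha> n" "\<forall>\<beta>\<in>SS. X \<in> \<beta> n \<longrightarrow> \<beta> \<notin> C" using assms(2) by blast
  moreover have "bas n X \<subseteq> SS - C"
  proof
    fix \<beta> assume "\<beta> \<in> bas n X"
    then have "\<beta> \<in> SS" "X \<in> \<beta> n" by (auto simp: bas_mem)
    then show "\<beta> \<in> SS - C" using \<open>\<forall>\<beta>\<in>SS. X \<in> \<beta> n \<longrightarrow> \<beta> \<notin> C\<close> by blast
  qed
  ultimately show "\<exists>n X. X \<in> \<alpha> n \<and> bas n X \<subseteq> SS - C" by blast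
qed

lemma closedD: assumes "cl C" "\<alpha> \<in> SS" "\<alpha> \<notin> C" shows "\<exists>n X. X \<in> \<alpha> n \<and> (\<forall>\<beta>\<in>C. X \<notin> \<beta> n)"
proof -
  have "sg_open V R A (SS - C)" "C \<subseteq> SS" using assms(1) unfolding sg_closed_def by auto
  then obtain n X where "X \<in> \<alpha> n" "bas n X \<subseteq> SS - C" using assms(2,3) unfolding sg_open_def by blast
  moreover have "\<forall>\<beta>\<in>C. X \<notin> \<beta> n"
  proof (intro ballI notI)
    fix \<beta> assume "\<beta> \<in> C" "X \<in> \<beta> n"
    then have "\<beta> \<in> bas n X" using \<open>C \<subseteq> SS\<close> by (auto simp: bas_mem)
    then show False using \<open>bas n X \<subseteq> SS - C\<close> \<open>\<beta> \<in> C\<close> by blast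
  qed
  ultimately show ?thesis by blast
qed

lemma closed_sub: "cl C \<Longrightarrow> C \<subseteq> SS" unfolding sg_closed_def by auto

lemma neq_sep: assumes a: "\<alpha> \<in> SS" and b: "\<beta> \<in> SS" and ne: "\<alpha> \<noteq> \<beta>"
  shows "\<exists>n X. X \<in> \<alpha> n \<and> X \<notin> \<beta> n"
proof -
  have "\<exists>n. \<alpha> n \<noteq> \<beta> n" using ne by (simp add: fun_eq_iff)
  then obtain n where "\<alpha> n \<noteq> \<beta> n" by blast
  then have "\<not> \<alpha> n \<subseteq> \<beta> n" using uf_eqI[OF SG_uf[OF a] SG_uf[OF b]] by auto
  then show ?thesis by auto
qed

lemma basic_int: assumes a: "\<alpha> \<in> SS" and X1: "X1 \<in> \<alpha> n1" and X2: "X2 \<in> \<alpha> n2"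
  shows "\<exists>N X. X \<in> \<alpha> N \<and> (\<forall>\<beta>\<in>SS. X \<in> \<beta> N \<longrightarrow> X1 \<in> \<beta> n1 \<and> X2 \<in> \<beta> n2)"
proof -
  define N where "N = max n1 n2"
  have m1: "n1 \<le> N" and m2: "n2 \<le> N" unfolding N_def by auto
  have s1: "X1 \<subseteq> HH n1" and s2: "X2 \<subseteq> HH n2" using SG_sub[OF a] X1 X2 by auto
  have "iu N n1 X1 \<in> \<alpha> N" "iu N n2 X2 \<in> \<alpha> N" using SG_coh[OF a m1] SG_coh[OF a m2] X1 X2 by auto
  then have "iu N n1 X1 \<inter> iu N n2 X2 \<in> \<alpha> N" using uf_int[OF SG_uf[OF a]] by blast
  moreover have "X1 \<in> \<beta> n1 \<and> X2 \<in> \<beta> n2" if b: "\<beta> \<in> SS" "iu N n1 X1 \<inter> iu N n2 X2 \<in> \<beta> N" for \<beta>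
  proof -
    have "iu N n1 X1 \<in> \<beta> N" "iu N n2 X2 \<in> \<beta> N"
      using uf_int_iff[OF SG_uf[OF b(1)] iu_sub iu_sub] b(2) by auto
    then show ?thesis using SG_coh[OF b(1) m1] SG_coh[OF b(1) m2] s1 s2 by auto
  qed
  ultimately show ?thesis by blast
qed

lemma dense: assumes a: "\<alpha> \<in> SS" and Y: "Y \<in> \<alpha> k" shows "\<exists>g\<in>GG. Y \<in> pr g k"
proof -
  obtain y where y: "y \<in> Y" using uf_ne[OF SG_uf[OF a] Y] by auto
  have Ys: "Y \<subseteq> HH k" using SG_sub[OF a Y] .
  obtain g where "g \<in> GG" "restrict g (A k) = y" using EXT y Ys by blast
  then show ?thesis using y Ys by (auto simp: pr_mem)
qed

definition piF where "piF Z f W = (\<lambda>n. {X. X \<subseteq> HH n \<and> {z \<in> Z. restrict (f z) (A n) \<in> X} \<in> W})"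

lemma piF_mem: "X \<in> piF Z f W n \<longleftrightarrow> X \<subseteq> HH n \<and> {z \<in> Z. restrict (f z) (A n) \<in> X} \<in> W"
  unfolding piF_def by simp

lemma piF_SG: assumes W: "ultrafilter_on Z W" and f: "\<And>z. z \<in> Z \<Longrightarrow> f z \<in> GG" shows "piF Z f W \<in> SS"
proof (rule SGI)
  fix n
  have fh: "\<And>z. z \<in> Z \<Longrightarrow> restrict (f z) (A n) \<in> HH n" using G_HH f by blast
  show "ultrafilter_on (HH n) (piF Z f W n)" unfolding ultrafilter_on_def
  proof (intro conjI ballI allI impI)
    show "piF Z f W n \<subseteq> Pow (HH n)" by (auto simp: piF_mem)
    have "{z \<in> Z. restrict (f z) (A n) \<in> HH n} = Z" using fh by auto
    then show "HH n \<in> piF Z f W n" using uf_top[OF W] by (simp add: piF_mem)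
    show "{} \<notin> piF Z f W n" using uf_empty[OF W] by (simp add: piF_mem)
  next
    fix Y Y' assume "Y \<in> piF Z f W n" "Y' \<in> piF Z f W n"
    then have "{z \<in> Z. restrict (f z) (A n) \<in> Y} \<inter> {z \<in> Z. restrict (f z) (A n) \<in> Y'} \<in> W"
      "Y \<subseteq> HH n" "Y' \<subseteq> HH n" using uf_int[OF W] by (auto simp: piF_mem)
    moreover have "{z \<in> Z. restrict (f z) (A n) \<in> Y} \<inter> {z \<in> Z. restrict (f z) (A n) \<in> Y'} =
       {z \<in> Z. restrict (f z) (A n) \<in> Y \<inter> Y'}" by auto
    ultimately show "Y \<inter> Y' \<in> piF Z f W n" by (auto simp: piF_mem)
  next
    fix Y Y' assume "Y \<in> piF Z f W n" "Y \<subseteq> Y' \<and> Y' \<subseteq> HH n"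
    then have "{z \<in> Z. restrict (f z) (A n) \<in> Y} \<in> W" "{z \<in> Z. restrict (f z) (A n) \<in> Y} \<subseteq> {z \<in> Z. restrict (f z) (A n) \<in> Y'}"
      "{z \<in> Z. restrict (f z) (A n) \<in> Y'} \<subseteq> Z" "Y' \<subseteq> HH n" by (auto simp: piF_mem)
    then show "Y' \<in> piF Z f W n" using uf_mono[OF W] by (simp add: piF_mem)
  next
    fix Y assume Y: "Y \<subseteq> HH n"
    have "{z \<in> Z. restrict (f z) (A n) \<in> HH n - Y} = Z - {z \<in> Z. restrict (f z) (A n) \<in> Y}" using fh by auto
    moreover have "{z \<in> Z. restrict (f z) (A n) \<in> Y} \<in> W \<or> Z - {z \<in> Z. restrict (f z) (A n) \<in> Y} \<in> W"
      using uf_compl[OF W, of "{z \<in> Z. restrict (f z) (A n) \<in> Y}"] by auto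
    ultimately show "Y \<in> piF Z f W n \<or> HH n - Y \<in> piF Z f W n" using Y by (auto simp: piF_mem)
  qed
next
  fix m n X assume mn: "m \<le> n" and X: "X \<subseteq> HH m"
  have "{z \<in> Z. restrict (f z) (A n) \<in> iu n m X} = {z \<in> Z. restrict (f z) (A m) \<in> X}"
  proof (intro set_eqI iffI)
    fix z assume "z \<in> {z \<in> Z. restrict (f z) (A n) \<in> iu n m X}"
    then have "z \<in> Z" "restrict (restrict (f z) (A n)) (A m) \<in> X" unfolding iu_mem by auto
    then show "z \<in> {z \<in> Z. restrict (f z) (A m) \<in> X}" unfolding rr[OF mn] by blast
  next
    fix z assume "z \<in> {z \<in> Z. restrict (f z) (A m) \<in> X}"
    then have "z \<in> Z" "restrict (restrict (f z) (A n)) (A m) \<in> X" unfolding rr[OF mn] by auto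
    moreover have "restrict (f z) (A n) \<in> HH n" using G_HH f \<open>z \<in> Z\<close> by blast
    ultimately show "z \<in> {z \<in> Z. restrict (f z) (A n) \<in> iu n m X}" unfolding iu_mem by blast
  qed
  then show "X \<in> piF Z f W m \<longleftrightarrow> iu n m X \<in> piF Z f W n" using X iu_sub by (simp add: piF_mem)
qed

lemma compact:
  assumes ne: "\<C> \<noteq> {}" and cC: "\<And>C. C \<in> \<C> \<Longrightarrow> cl C" and neC: "\<And>C. C \<in> \<C> \<Longrightarrow> C \<noteq> {}"
    and dir: "\<And>C1 C2. C1 \<in> \<C> \<Longrightarrow> C2 \<in> \<C> \<Longrightarrow> \<exists>C3\<in>\<C>. C3 \<subseteq> C1 \<inter> C2"
  shows "\<exists>\<alpha>. \<forall>C\<in>\<C>. \<alpha> \<in> C"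
proof -
  define Ix where "Ix = {(n, X). X \<subseteq> HH n \<and> (\<exists>C\<in>\<C>. \<forall>\<beta>\<in>C. X \<in> \<beta> n)}"
  define sf where "sf = (\<lambda>(n, X). {g \<in> GG. restrict g (A n) \<in> X})"
  define B where "B = sf ` Ix"
  have sf: "sf (n, X) = {g \<in> GG. restrict g (A n) \<in> X}" for n X unfolding sf_def by simp
  have Ix: "(n, X) \<in> Ix \<longleftrightarrow> X \<subseteq> HH n \<and> (\<exists>C\<in>\<C>. \<forall>\<beta>\<in>C. X \<in> \<beta> n)" for n X unfolding Ix_def by simp
  have "\<exists>W. ultrafilter_on GG W \<and> B \<subseteq> W"
  proof (rule uf_exists)
    show "B \<subseteq> Pow GG" unfolding B_def sf_def by auto
    obtain C0 where C0: "C0 \<in> \<C>" using ne by auto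
    have "\<forall>\<beta>\<in>C0. HH 0 \<in> \<beta> 0" using closed_sub[OF cC[OF C0]] uf_top[OF SG_uf] by blast
    then have "(0, HH 0) \<in> Ix" using C0 by (simp add: Ix) blast
    then show "B \<noteq> {}" unfolding B_def by blast
    show "{} \<notin> B"
    proof
      assume "{} \<in> B"
      then obtain i where i: "i \<in> Ix" "sf i = {}" unfolding B_def by blast
      obtain n X where nX: "i = (n, X)" by (cases i)
      have "(n, X) \<in> Ix" using i(1) nX by simp
      then have "X \<subseteq> HH n \<and> (\<exists>C\<in>\<C>. \<forall>\<beta>\<in>C. X \<in> \<beta> n)" by (simp only: Ix)
      then obtain C where C: "X \<subseteq> HH n" "C \<in> \<C>" "\<forall>\<beta>\<in>C. X \<in> \<beta> n" by blast
      have e: "{g \<in> GG. restrict g (A n) \<in> X} = {}" using i(2) nX sf by simp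
      obtain \<beta> where "\<beta> \<in> C" using neC[OF C(2)] by auto
      then have "\<beta> \<in> SS" "X \<in> \<beta> n" using C closed_sub[OF cC[OF C(2)]] by auto
      then obtain g where "g \<in> GG" "X \<in> pr g n" using dense by blast
      then show False using e by (auto simp: pr_mem)
    qed
  next
    fix a b assume "a \<in> B" "b \<in> B"
    then obtain i j where ij: "i \<in> Ix" "j \<in> Ix" "a = sf i" "b = sf j" unfolding B_def by blast
    obtain n1 X1 where i: "i = (n1, X1)" by (cases i)
    obtain n2 X2 where j: "j = (n2, X2)" by (cases j)
    have "(n1, X1) \<in> Ix" using ij(1) i by simp
    then have "X1 \<subseteq> HH n1 \<and> (\<exists>C\<in>\<C>. \<forall>\<beta>\<in>C. X1 \<in> \<beta> n1)" by (simp only: Ix)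
    moreover have "a = {g \<in> GG. restrict g (A n1) \<in> X1}" using ij(3) i sf by simp
    ultimately obtain C1 where a: "a = {g \<in> GG. restrict g (A n1) \<in> X1}" "X1 \<subseteq> HH n1" "C1 \<in> \<C>" "\<forall>\<beta>\<in>C1. X1 \<in> \<beta> n1"
      by blast
    have "(n2, X2) \<in> Ix" using ij(2) j by simp
    then have "X2 \<subseteq> HH n2 \<and> (\<exists>C\<in>\<C>. \<forall>\<beta>\<in>C. X2 \<in> \<beta> n2)" by (simp only: Ix)
    moreover have "b = {g \<in> GG. restrict g (A n2) \<in> X2}" using ij(4) j sf by simp
    ultimately obtain C2 where b: "b = {g \<in> GG. restrict g (A n2) \<in> X2}" "X2 \<subseteq> HH n2" "C2 \<in> \<C>" "\<forall>\<beta>\<in>C2. X2 \<in> \<beta> n2"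
      by blast
    obtain C3 where C3: "C3 \<in> \<C>" "C3 \<subseteq> C1 \<inter> C2" using dir[OF a(3) b(3)] by blast
    define N where "N = max n1 n2"
    have m1: "n1 \<le> N" and m2: "n2 \<le> N" unfolding N_def by auto
    define X where "X = iu N n1 X1 \<inter> iu N n2 X2"
    have "\<forall>\<beta>\<in>C3. X \<in> \<beta> N"
    proof
      fix \<beta> assume "\<beta> \<in> C3"
      then have bs: "\<beta> \<in> SS" "X1 \<in> \<beta> n1" "X2 \<in> \<beta> n2" using C3 a b closed_sub[OF cC[OF C3(1)]] by auto
      then have "iu N n1 X1 \<in> \<beta> N" "iu N n2 X2 \<in> \<beta> N" using SG_coh[OF bs(1) m1] SG_coh[OF bs(1) m2] by auto
      then show "X \<in> \<beta> N" unfolding X_def using uf_int[OF SG_uf[OF bs(1)]] by blast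
    qed
    moreover have "X \<subseteq> HH N" unfolding X_def using iu_sub by auto
    ultimately have "(N, X) \<in> Ix" using C3(1) by (simp add: Ix) blast
    then have "sf (N, X) \<in> B" unfolding B_def by blast
    moreover have "{g \<in> GG. restrict g (A N) \<in> X} \<subseteq> a \<inter> b"
    proof
      fix g assume "g \<in> {g \<in> GG. restrict g (A N) \<in> X}"
      then have "g \<in> GG" "restrict (restrict g (A N)) (A n1) \<in> X1" "restrict (restrict g (A N)) (A n2) \<in> X2"
        unfolding X_def by (simp_all add: iu_mem del: restrict_restrict)
      then show "g \<in> a \<inter> b" unfolding a(1) b(1) rr[OF m1] rr[OF m2] by blast
    qed
    ultimately show "\<exists>c\<in>B. c \<subseteq> a \<inter> b" using sf by metis
  qed
  then obtain W where W: "ultrafilter_on GG W" "B \<subseteq> W" by blast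
  define \<alpha> where "\<alpha> = piF GG (\<lambda>g. g) W"
  have a: "\<alpha> \<in> SS" unfolding \<alpha>_def by (rule piF_SG[OF W(1)])
  have "\<alpha> \<in> C" if C: "C \<in> \<C>" for C
  proof (rule ccontr)
    assume "\<alpha> \<notin> C"
    then obtain n X where X: "X \<in> \<alpha> n" "\<forall>\<beta>\<in>C. X \<notin> \<beta> n" using closedD[OF cC[OF C] a] by blast
    have Xs: "X \<subseteq> HH n" using SG_sub[OF a X(1)] .
    have "\<forall>\<beta>\<in>C. HH n - X \<in> \<beta> n"
    proof
      fix \<beta> assume b: "\<beta> \<in> C"
      then have bS: "\<beta> \<in> SS" using closed_sub[OF cC[OF C]] by blast
      show "HH n - X \<in> \<beta> n" using uf_compl[OF SG_uf[OF bS] Xs] X(2) b by blast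
    qed
    then have "(n, HH n - X) \<in> Ix" using C by (simp add: Ix) blast
    then have "{g \<in> GG. restrict g (A n) \<in> HH n - X} \<in> B" unfolding B_def using sf by (metis image_eqI)
    then have 1: "{g \<in> GG. restrict g (A n) \<in> HH n - X} \<in> W" using W(2) by blast
    have 2: "{g \<in> GG. restrict g (A n) \<in> X} \<in> W" using X(1) unfolding \<alpha>_def by (simp add: piF_mem)
    have "{g \<in> GG. restrict g (A n) \<in> HH n - X} \<inter> {g \<in> GG. restrict g (A n) \<in> X} = {}" by auto
    then show False using uf_int[OF W(1) 1 2] uf_empty[OF W(1)] by simp
  qed
  then show ?thesis by blast
qed

lemma cont_prod: assumes p: "p \<in> SS" shows "cont (prod p)"
  unfolding sg_continuous_def
proof (intro allI impI)
  fix U assume U: "sg_open V R A U"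
  show "sg_open V R A {\<alpha> \<in> SS. prod p \<alpha> \<in> U}" unfolding sg_open_def
  proof (intro conjI ballI)
    show "{\<alpha> \<in> SS. prod p \<alpha> \<in> U} \<subseteq> SS" by auto
    fix \<alpha> assume a: "\<alpha> \<in> {\<alpha> \<in> SS. prod p \<alpha> \<in> U}"
    then obtain n X where X: "X \<in> prod p \<alpha> n" "bas n X \<subseteq> U" using U unfolding sg_open_def by blast
    have "rmul n X p \<in> \<alpha> n" "X \<subseteq> HH n" using X(1) by (auto simp: prod_mem)
    moreover have "bas n (rmul n X p) \<subseteq> {\<alpha> \<in> SS. prod p \<alpha> \<in> U}"
    proof
      fix \<beta> assume "\<beta> \<in> bas n (rmul n X p)"
      then have "\<beta> \<in> SS" "X \<in> prod p \<beta> n" using \<open>X \<subseteq> HH n\<close> by (auto simp: bas_mem prod_mem)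
      then show "\<beta> \<in> {\<alpha> \<in> SS. prod p \<alpha> \<in> U}" using X(2) prod_SG[OF p] by (auto simp: bas_mem)
    qed
    ultimately show "\<exists>n X. X \<in> \<alpha> n \<and> bas n X \<subseteq> {\<alpha> \<in> SS. prod p \<alpha> \<in> U}" by blast
  qed
qed

lemma cont_basic: assumes c: "cont \<phi>" and m: "\<forall>\<alpha>\<in>SS. \<phi> \<alpha> \<in> SS" and a: "\<alpha> \<in> SS" and X: "X \<in> \<phi> \<alpha> n"
  shows "\<exists>k Y. Y \<in> \<alpha> k \<and> (\<forall>\<beta>\<in>SS. Y \<in> \<beta> k \<longrightarrow> X \<in> \<phi> \<beta> n)"
proof -
  have "sg_open V R A {\<beta> \<in> SS. \<phi> \<beta> \<in> bas n X}" using c bas_open unfolding sg_continuous_def by blast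
  moreover have "\<alpha> \<in> {\<beta> \<in> SS. \<phi> \<beta> \<in> bas n X}" using a X m by (auto simp: bas_mem)
  ultimately obtain k Y where kY: "Y \<in> \<alpha> k" "bas k Y \<subseteq> {\<beta> \<in> SS. \<phi> \<beta> \<in> bas n X}" unfolding sg_open_def by blast
  have "\<forall>\<beta>\<in>SS. Y \<in> \<beta> k \<longrightarrow> X \<in> \<phi> \<beta> n"
  proof (intro ballI impI)
    fix \<beta> assume "\<beta> \<in> SS" "Y \<in> \<beta> k"
    then have "\<beta> \<in> bas k Y" by (simp add: bas_mem)
    then show "X \<in> \<phi> \<beta> n" using kY(2) by (auto simp: bas_mem)
  qed
  then show ?thesis using kY(1) by blast
qed

lemma uniq: assumes c1: "cont \<phi>" and c2: "cont \<psi>" and m1: "\<forall>\<alpha>\<in>SS. \<phi> \<alpha> \<in> SS" and m2: "\<forall>\<alpha>\<in>SS. \<psi> \<alpha> \<in> SS"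
  and eq: "\<And>g. g \<in> GG \<Longrightarrow> \<phi> (pr g) = \<psi> (pr g)" and a: "\<alpha> \<in> SS"
  shows "\<phi> \<alpha> = \<psi> \<alpha>"
proof (rule ccontr)
  assume "\<phi> \<alpha> \<noteq> \<psi> \<alpha>"
  then obtain n X where X: "X \<in> \<phi> \<alpha> n" "X \<notin> \<psi> \<alpha> n" using neq_sep m1 m2 a by blast
  have Xs: "X \<subseteq> HH n" using SG_sub X(1) m1 a by blast
  have pa: "\<psi> \<alpha> \<in> SS" using m2 a by blast
  have X2: "HH n - X \<in> \<psi> \<alpha> n" using uf_compl[OF SG_uf[OF pa] Xs] X(2) by blast
  obtain k1 Y1 where Y1: "Y1 \<in> \<alpha> k1" "\<forall>\<beta>\<in>SS. Y1 \<in> \<beta> k1 \<longrightarrow> X \<in> \<phi> \<beta> n" using cont_basic[OF c1 m1 a X(1)] by blast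
  obtain k2 Y2 where Y2: "Y2 \<in> \<alpha> k2" "\<forall>\<beta>\<in>SS. Y2 \<in> \<beta> k2 \<longrightarrow> HH n - X \<in> \<psi> \<beta> n" using cont_basic[OF c2 m2 a X2] by blast
  obtain N Y where Y: "Y \<in> \<alpha> N" "\<forall>\<beta>\<in>SS. Y \<in> \<beta> N \<longrightarrow> Y1 \<in> \<beta> k1 \<and> Y2 \<in> \<beta> k2"
    using basic_int[OF a Y1(1) Y2(1)] by blast
  obtain g where g: "g \<in> GG" "Y \<in> pr g N" using dense[OF a Y(1)] by blast
  have pg: "pr g \<in> SS" by (rule pr_SG[OF g(1)])
  have "X \<in> \<phi> (pr g) n" "HH n - X \<in> \<psi> (pr g) n" using Y(2) Y1(2) Y2(2) pg g(2) by auto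
  then have "X \<in> \<phi> (pr g) n" "HH n - X \<in> \<phi> (pr g) n" using eq[OF g(1)] by auto
  moreover have "\<phi> (pr g) \<in> SS" using m1 pg by blast
  ultimately show False using uf_compl[OF SG_uf Xs] by blast
qed

lemma retr_rep: assumes r: "retraction V R A M \<phi>" and MS: "M \<subseteq> SS" and a: "\<alpha> \<in> SS"
  shows "\<phi> \<alpha> = prod (\<phi> (pr idV)) \<alpha>"
proof -
  have e: "pr idV \<in> SS" by (rule pr_SG[OF idV_G])
  have rM: "\<forall>\<alpha>\<in>SS. \<phi> \<alpha> \<in> M" and rc: "cont \<phi>"
    and req: "\<forall>\<alpha>\<in>SS. \<forall>g\<in>GG. \<phi> (act V R A \<alpha> g) = act V R A (\<phi> \<alpha>) g"
    using r unfolding retraction_def by auto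
  have p: "\<phi> (pr idV) \<in> SS" using rM e MS by blast
  show ?thesis
  proof (rule uniq[OF rc cont_prod[OF p] _ _ _ a])
    show "\<forall>\<alpha>\<in>SS. \<phi> \<alpha> \<in> SS" using rM MS by blast
    show "\<forall>\<alpha>\<in>SS. prod (\<phi> (pr idV)) \<alpha> \<in> SS" using prod_SG[OF p] by blast
  next
    fix g assume g: "g \<in> GG"
    have "\<phi> (pr g) = \<phi> (act V R A (pr idV) g)" using act_e[OF g] by simp
    also have "\<dots> = act V R A (\<phi> (pr idV)) g" using req e g by blast
    also have "\<dots> = prod (\<phi> (pr idV)) (pr g)" by (rule act_prod[OF p g])
    finally show "\<phi> (pr g) = prod (\<phi> (pr idV)) (pr g)" .
  qed
qed

end



context fr begin

lemma bas_closed: assumes Xs: "X \<subseteq> HH n" shows "cl (bas n X)"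
proof (rule closedI)
  show "bas n X \<subseteq> SS" by (auto simp: bas_mem)
  fix \<alpha> assume a: "\<alpha> \<in> SS" "\<alpha> \<notin> bas n X"
  then have "X \<notin> \<alpha> n" by (simp add: bas_mem)
  then have "HH n - X \<in> \<alpha> n" using uf_compl[OF SG_uf[OF a(1)] Xs] by blast
  moreover have "\<forall>\<beta>\<in>SS. HH n - X \<in> \<beta> n \<longrightarrow> \<beta> \<notin> bas n X"
  proof (intro ballI impI)
    fix \<beta> assume "\<beta> \<in> SS" "HH n - X \<in> \<beta> n"
    then have "X \<notin> \<beta> n" using uf_compl[OF SG_uf[OF \<open>\<beta> \<in> SS\<close>] Xs] by blast
    then show "\<beta> \<notin> bas n X" by (simp add: bas_mem)
  qed
  ultimately show "\<exists>n' X'. X' \<in> \<alpha> n' \<and> (\<forall>\<beta>\<in>SS. X' \<in> \<beta> n' \<longrightarrow> \<beta> \<notin> bas n X)" by blast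
qed

lemma closed_Int: assumes c1: "cl C1" and c2: "cl C2" shows "cl (C1 \<inter> C2)"
proof (rule closedI)
  show "C1 \<inter> C2 \<subseteq> SS" using closed_sub[OF c1] by blast
  fix \<alpha> assume a: "\<alpha> \<in> SS" "\<alpha> \<notin> C1 \<inter> C2"
  show "\<exists>n X. X \<in> \<alpha> n \<and> (\<forall>\<beta>\<in>SS. X \<in> \<beta> n \<longrightarrow> \<beta> \<notin> C1 \<inter> C2)"
  proof (cases "\<alpha> \<in> C1")
    case False
    then obtain n X where "X \<in> \<alpha> n" "\<forall>\<beta>\<in>C1. X \<notin> \<beta> n" using closedD[OF c1 a(1)] by blast
    then show ?thesis by blast
  next
    case True
    then have "\<alpha> \<notin> C2" using a by blast
    then obtain n X where "X \<in> \<alpha> n" "\<forall>\<beta>\<in>C2. X \<notin> \<beta> n" using closedD[OF c2 a(1)] by blast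
    then show ?thesis by blast
  qed
qed

lemma closed_Inter: assumes ne: "\<C> \<noteq> {}" and c: "\<And>C. C \<in> \<C> \<Longrightarrow> cl C" shows "cl (\<Inter>\<C>)"
proof (rule closedI)
  obtain C0 where "C0 \<in> \<C>" using ne by auto
  then show "\<Inter>\<C> \<subseteq> SS" using closed_sub[OF c] by blast
  fix \<alpha> assume a: "\<alpha> \<in> SS" "\<alpha> \<notin> \<Inter>\<C>"
  then obtain C where C: "C \<in> \<C>" "\<alpha> \<notin> C" by blast
  then obtain n X where "X \<in> \<alpha> n" "\<forall>\<beta>\<in>C. X \<notin> \<beta> n" using closedD[OF c[OF C(1)] a(1)] by blast
  then show "\<exists>n X. X \<in> \<alpha> n \<and> (\<forall>\<beta>\<in>SS. X \<in> \<beta> n \<longrightarrow> \<beta> \<notin> \<Inter>\<C>)" using C(1) by blast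
qed

lemma closed_eq: assumes x: "x \<in> SS" and z: "z \<in> SS" shows "cl {y \<in> SS. prod x y = z}"
proof (rule closedI)
  show "{y \<in> SS. prod x y = z} \<subseteq> SS" by blast
  fix y assume y: "y \<in> SS" "y \<notin> {y \<in> SS. prod x y = z}"
  then have "z \<noteq> prod x y" by auto
  then obtain n X where X: "X \<in> z n" "X \<notin> prod x y n" using neq_sep[OF z prod_SG[OF x y(1)]] by blast
  have Xs: "X \<subseteq> HH n" using SG_sub[OF z X(1)] .
  have "rmul n X x \<notin> y n" using X(2) Xs by (simp add: prod_mem)
  then have "HH n - rmul n X x \<in> y n" using uf_compl[OF SG_uf[OF y(1)] rmul_sub] by blast
  moreover have "\<forall>\<beta>\<in>SS. HH n - rmul n X x \<in> \<beta> n \<longrightarrow> \<beta> \<notin> {y \<in> SS. prod x y = z}"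
  proof (intro ballI impI)
    fix \<beta> assume b: "\<beta> \<in> SS" "HH n - rmul n X x \<in> \<beta> n"
    then have "rmul n X x \<notin> \<beta> n" using uf_compl[OF SG_uf[OF b(1)] rmul_sub] by blast
    then have "X \<notin> prod x \<beta> n" by (simp add: prod_mem)
    then show "\<beta> \<notin> {y \<in> SS. prod x y = z}" using X(1) by auto
  qed
  ultimately show "\<exists>n X. X \<in> y n \<and> (\<forall>\<beta>\<in>SS. X \<in> \<beta> n \<longrightarrow> \<beta> \<notin> {y \<in> SS. prod x y = z})" by blast
qed

lemma closed_rmul: assumes F: "F \<subseteq> HH n" shows "cl {q \<in> SS. rmul n T q \<inter> F = T' \<inter> F}"
proof (rule closedI)
  show "{q \<in> SS. rmul n T q \<inter> F = T' \<inter> F} \<subseteq> SS" by blast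
  fix q assume q: "q \<in> SS" "q \<notin> {q \<in> SS. rmul n T q \<inter> F = T' \<inter> F}"
  then obtain y where y: "y \<in> F" "(y \<in> rmul n T q) \<noteq> (y \<in> T')" by blast
  have yh: "y \<in> HH n" using y F by blast
  obtain N where N: "y ` A n \<subseteq> A N" using HH_cover[OF yh] by blast
  show "\<exists>m X. X \<in> q m \<and> (\<forall>\<beta>\<in>SS. X \<in> \<beta> m \<longrightarrow> \<beta> \<notin> {q \<in> SS. rmul n T q \<inter> F = T' \<inter> F})"
  proof (cases "y \<in> rmul n T q")
    case True
    then have "Qs n T y N \<in> q N" using rmul_iff[OF q(1) N] by simp
    moreover have "\<forall>\<beta>\<in>SS. Qs n T y N \<in> \<beta> N \<longrightarrow> \<beta> \<notin> {q \<in> SS. rmul n T q \<inter> F = T' \<inter> F}"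
    proof (intro ballI impI)
      fix \<beta> assume b: "\<beta> \<in> SS" "Qs n T y N \<in> \<beta> N"
      then have "y \<in> rmul n T \<beta>" using rmul_iff[OF b(1) N] yh by simp
      then show "\<beta> \<notin> {q \<in> SS. rmul n T q \<inter> F = T' \<inter> F}" using True y by blast
    qed
    ultimately show ?thesis by blast
  next
    case False
    then have "Qs n T y N \<notin> q N" using rmul_iff[OF q(1) N] yh by simp
    then have "HH N - Qs n T y N \<in> q N" using uf_compl[OF SG_uf[OF q(1)] Qs_sub] by blast
    moreover have "\<forall>\<beta>\<in>SS. HH N - Qs n T y N \<in> \<beta> N \<longrightarrow> \<beta> \<notin> {q \<in> SS. rmul n T q \<inter> F = T' \<inter> F}"
    proof (intro ballI impI)
      fix \<beta> assume b: "\<beta> \<in> SS" "HH N - Qs n T y N \<in> \<beta> N"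
      then have "Qs n T y N \<notin> \<beta> N" using uf_compl[OF SG_uf[OF b(1)] Qs_sub] by blast
      then have "y \<notin> rmul n T \<beta>" using rmul_iff[OF b(1) N] by simp
      then show "\<beta> \<notin> {q \<in> SS. rmul n T q \<inter> F = T' \<inter> F}" using False y by blast
    qed
    ultimately show ?thesis by blast
  qed
qed

lemma closed_image: assumes x: "x \<in> SS" and c: "cl C" shows "cl (prod x ` C)"
proof (rule closedI)
  have CS: "C \<subseteq> SS" by (rule closed_sub[OF c])
  show "prod x ` C \<subseteq> SS" using prod_SG[OF x] CS by blast
  fix \<beta> assume b: "\<beta> \<in> SS" "\<beta> \<notin> prod x ` C"
  show "\<exists>n X. X \<in> \<beta> n \<and> (\<forall>\<gamma>\<in>SS. X \<in> \<gamma> n \<longrightarrow> \<gamma> \<notin> prod x ` C)"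
  proof (rule ccontr)
    assume "\<not> ?thesis"
    then have H: "\<And>n X. X \<in> \<beta> n \<Longrightarrow> \<exists>\<gamma>\<in>SS. X \<in> \<gamma> n \<and> \<gamma> \<in> prod x ` C" by blast
    define \<C> where "\<C> = {C \<inter> bas n (rmul n X x) | n X. X \<in> \<beta> n}"
    have "\<exists>y. \<forall>D\<in>\<C>. y \<in> D"
    proof (rule compact)
      have "HH 0 \<in> \<beta> 0" using uf_top[OF SG_uf[OF b(1)]] by simp
      then show "\<C> \<noteq> {}" unfolding \<C>_def by blast
    next
      fix D assume "D \<in> \<C>"
      then obtain n X where D: "D = C \<inter> bas n (rmul n X x)" "X \<in> \<beta> n" unfolding \<C>_def by blast
      show "cl D" unfolding D(1) by (rule closed_Int[OF c bas_closed[OF rmul_sub]])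
      obtain \<gamma> where g: "\<gamma> \<in> SS" "X \<in> \<gamma> n" "\<gamma> \<in> prod x ` C" using H[OF D(2)] by blast
      then obtain y where y: "y \<in> C" "\<gamma> = prod x y" by blast
      have "rmul n X x \<in> y n" using g(2) y(2) by (simp add: prod_mem)
      then have "y \<in> D" unfolding D(1) using y(1) CS by (auto simp: bas_mem)
      then show "D \<noteq> {}" by blast
    next
      fix D1 D2 assume "D1 \<in> \<C>" "D2 \<in> \<C>"
      then obtain n1 X1 n2 X2 where D1: "D1 = C \<inter> bas n1 (rmul n1 X1 x)" "X1 \<in> \<beta> n1"
        and D2: "D2 = C \<inter> bas n2 (rmul n2 X2 x)" "X2 \<in> \<beta> n2" unfolding \<C>_def by blast
      obtain N X where NX: "X \<in> \<beta> N" "\<forall>\<gamma>\<in>SS. X \<in> \<gamma> N \<longrightarrow> X1 \<in> \<gamma> n1 \<and> X2 \<in> \<gamma> n2"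
        using basic_int[OF b(1) D1(2) D2(2)] by blast
      have "C \<inter> bas N (rmul N X x) \<in> \<C>" unfolding \<C>_def using NX(1) by blast
      moreover have "C \<inter> bas N (rmul N X x) \<subseteq> D1 \<inter> D2"
      proof
        fix y assume "y \<in> C \<inter> bas N (rmul N X x)"
        then have y: "y \<in> C" "y \<in> SS" "rmul N X x \<in> y N" by (auto simp: bas_mem)
        have "X \<subseteq> HH N" using SG_sub[OF b(1) NX(1)] .
        then have "X \<in> prod x y N" using y(3) by (simp add: prod_mem)
        then have "X1 \<in> prod x y n1" "X2 \<in> prod x y n2" using NX(2) prod_SG[OF x y(2)] by blast+
        then have "rmul n1 X1 x \<in> y n1" "rmul n2 X2 x \<in> y n2" by (simp_all add: prod_mem)
        then show "y \<in> D1 \<inter> D2" unfolding D1(1) D2(1) using y by (auto simp: bas_mem)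
      qed
      ultimately show "\<exists>D3\<in>\<C>. D3 \<subseteq> D1 \<inter> D2" by blast
    qed
    then obtain y where y: "\<forall>D\<in>\<C>. y \<in> D" by blast
    have mem: "y \<in> C \<and> rmul n X x \<in> y n" if "X \<in> \<beta> n" for n X
    proof -
      have "C \<inter> bas n (rmul n X x) \<in> \<C>" unfolding \<C>_def using that by blast
      then show ?thesis using y by (auto simp: bas_mem)
    qed
    have yC: "y \<in> C" using mem[of "HH 0" 0] uf_top[OF SG_uf[OF b(1)]] by blast
    have yS: "y \<in> SS" using yC CS by blast
    have "prod x y = \<beta>"
    proof (rule ccontr)
      assume "prod x y \<noteq> \<beta>"
      then obtain n X where X: "X \<in> \<beta> n" "X \<notin> prod x y n" using neq_sep[OF b(1) prod_SG[OF x yS]] by metis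
      have "rmul n X x \<in> y n" using mem[OF X(1)] by blast
      then have "X \<in> prod x y n" using SG_sub[OF b(1) X(1)] by (simp add: prod_mem)
      then show False using X(2) by blast
    qed
    then show False using b(2) yC by blast
  qed
qed

lemma ellis: assumes QS: "Q \<subseteq> SS" and Qne: "Q \<noteq> {}" and Qc: "cl Q"
    and Qs: "\<And>p q. p \<in> Q \<Longrightarrow> q \<in> Q \<Longrightarrow> prod p q \<in> Q"
  shows "\<exists>u\<in>Q. prod u u = u"
proof -
  define \<S> where "\<S> = {P. P \<subseteq> Q \<and> P \<noteq> {} \<and> cl P \<and> (\<forall>a\<in>P. \<forall>b\<in>P. prod a b \<in> P)}"
  have S_S: "P \<subseteq> SS" if "P \<in> \<S>" for P using that QS unfolding \<S>_def by blast
  define \<A> where "\<A> = (\<lambda>P. SS - P) ` \<S>"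
  have QA: "Q \<in> \<S>" unfolding \<S>_def using Qne Qc Qs by blast
  have "\<exists>M\<in>\<A>. \<forall>X\<in>\<A>. M \<subseteq> X \<longrightarrow> X = M"
  proof (rule subset_Zorn_nonempty)
    show "\<A> \<noteq> {}" unfolding \<A>_def using QA by blast
  next
    fix K assume K: "K \<noteq> {}" "subset.chain \<A> K"
    have KA: "K \<subseteq> \<A>" and Kch: "\<And>k1 k2. k1 \<in> K \<Longrightarrow> k2 \<in> K \<Longrightarrow> k1 \<subseteq> k2 \<or> k2 \<subseteq> k1"
      using K(2) unfolding subset.chain_def by auto
    define Ps where "Ps = {P \<in> \<S>. SS - P \<in> K}"
    have kP: "\<exists>P\<in>Ps. k = SS - P" if kK: "k \<in> K" for k
    proof -
      have "k \<in> (\<lambda>P. SS - P) ` \<S>" using kK KA unfolding \<A>_def by blast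
      then obtain P where "P \<in> \<S>" "k = SS - P" by blast
      then show ?thesis unfolding Ps_def using kK by blast
    qed
    have Psne: "Ps \<noteq> {}" using K(1) kP by blast
    have PsS: "\<And>P. P \<in> Ps \<Longrightarrow> P \<in> \<S>" unfolding Ps_def by blast
    define I where "I = \<Inter>Ps"
    have Ic: "cl I" unfolding I_def
      by (rule closed_Inter[OF Psne]) (use PsS in \<open>auto simp: \<S>_def\<close>)
    have "\<exists>\<alpha>. \<forall>P\<in>Ps. \<alpha> \<in> P"
    proof (rule compact[OF Psne])
      show "\<And>C. C \<in> Ps \<Longrightarrow> cl C" "\<And>C. C \<in> Ps \<Longrightarrow> C \<noteq> {}" using PsS unfolding \<S>_def by auto
    next
      fix P1 P2 assume P: "P1 \<in> Ps" "P2 \<in> Ps"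
      then have "SS - P1 \<subseteq> SS - P2 \<or> SS - P2 \<subseteq> SS - P1" using Kch unfolding Ps_def by blast
      moreover have "P1 \<subseteq> SS" "P2 \<subseteq> SS" using P PsS S_S by auto
      ultimately have "P2 \<subseteq> P1 \<or> P1 \<subseteq> P2" by blast
      then show "\<exists>C3\<in>Ps. C3 \<subseteq> P1 \<inter> P2" using P by blast
    qed
    then have Ine: "I \<noteq> {}" unfolding I_def by blast
    have IS: "I \<in> \<S>" unfolding \<S>_def
    proof (intro CollectI conjI ballI)
      show "I \<subseteq> Q" unfolding I_def using Psne PsS unfolding \<S>_def by blast
      show "I \<noteq> {}" by fact
      show "cl I" by fact
      fix a b assume "a \<in> I" "b \<in> I"
      then show "prod a b \<in> I" unfolding I_def using PsS unfolding \<S>_def by blast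
    qed
    have "\<Union>K = SS - I"
    proof
      show "\<Union>K \<subseteq> SS - I"
      proof
        fix z assume "z \<in> \<Union>K"
        then obtain k where "k \<in> K" "z \<in> k" by blast
        then obtain P where "P \<in> Ps" "z \<in> SS - P" using kP by blast
        then show "z \<in> SS - I" unfolding I_def by blast
      qed
      show "SS - I \<subseteq> \<Union>K"
      proof
        fix z assume "z \<in> SS - I"
        then obtain P where "P \<in> Ps" "z \<in> SS - P" unfolding I_def by blast
        then show "z \<in> \<Union>K" unfolding Ps_def by blast
      qed
    qed
    then show "\<Union>K \<in> \<A>" unfolding \<A>_def using IS by blast
  qed
  then obtain P0 where P0: "P0 \<in> \<S>" and max: "\<And>X. X \<in> \<A> \<Longrightarrow> SS - P0 \<subseteq> X \<Longrightarrow> X = SS - P0"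
    unfolding \<A>_def by blast
  have minP: "P = P0" if "P \<in> \<S>" "P \<subseteq> P0" for P
  proof -
    have "SS - P \<in> \<A>" unfolding \<A>_def using that by blast
    moreover have "SS - P0 \<subseteq> SS - P" using that by blast
    ultimately have "SS - P = SS - P0" using max by blast
    then show ?thesis using S_S[OF that(1)] S_S[OF P0] by blast
  qed
  have P0d: "P0 \<subseteq> Q" "P0 \<noteq> {}" "cl P0" "\<And>a b. a \<in> P0 \<Longrightarrow> b \<in> P0 \<Longrightarrow> prod a b \<in> P0"
    using P0 unfolding \<S>_def by auto
  have P0S: "P0 \<subseteq> SS" using S_S[OF P0] .
  obtain x where x: "x \<in> P0" using P0d(2) by blast
  have xS: "x \<in> SS" using x P0S by blast
  have "prod x ` P0 \<in> \<S>" unfolding \<S>_def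
  proof (intro CollectI conjI ballI)
    show "prod x ` P0 \<subseteq> Q" using P0d(1,4) x by blast
    show "prod x ` P0 \<noteq> {}" using P0d(2) by blast
    show "cl (prod x ` P0)" by (rule closed_image[OF xS P0d(3)])
    fix a b assume "a \<in> prod x ` P0" "b \<in> prod x ` P0"
    then obtain a' b' where ab: "a' \<in> P0" "b' \<in> P0" "a = prod x a'" "b = prod x b'" by blast
    have "prod a b = prod x (prod a' (prod x b'))"
      using ab assoc[OF xS, of a' "prod x b'"] P0S prod_SG[OF xS] by (simp add: subset_iff)
    moreover have "prod a' (prod x b') \<in> P0" using P0d(4) ab x by blast
    ultimately show "prod a b \<in> prod x ` P0" by blast
  qed
  moreover have "prod x ` P0 \<subseteq> P0" using P0d(4) x by blast
  ultimately have e1: "prod x ` P0 = P0" using minP by blast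
  define P2 where "P2 = {y \<in> P0. prod x y = x}"
  have "P2 \<in> \<S>" unfolding \<S>_def
  proof (intro CollectI conjI ballI)
    show "P2 \<subseteq> Q" unfolding P2_def using P0d(1) by blast
    have "x \<in> prod x ` P0" using e1 x by simp
    then obtain y where "y \<in> P0" "x = prod x y" by blast
    then show "P2 \<noteq> {}" unfolding P2_def by auto
    have "P2 = P0 \<inter> {y \<in> SS. prod x y = x}" unfolding P2_def using P0S by blast
    then show "cl P2" using closed_Int[OF P0d(3) closed_eq[OF xS xS]] by simp
    fix a b assume ab: "a \<in> P2" "b \<in> P2"
    then have ab': "a \<in> P0" "b \<in> P0" "prod x a = x" "prod x b = x" unfolding P2_def by auto
    have aS: "a \<in> SS" and bS: "b \<in> SS" using ab' P0S by auto
    have "prod x (prod a b) = prod (prod x a) b" by (rule assoc[OF xS aS bS])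
    then have "prod x (prod a b) = x" using ab' by simp
    then show "prod a b \<in> P2" unfolding P2_def using P0d(4) ab' by blast
  qed
  moreover have "P2 \<subseteq> P0" unfolding P2_def by blast
  ultimately have "P2 = P0" using minP by blast
  then have "prod x x = x" using x unfolding P2_def by blast
  then show ?thesis using x P0d(1) by blast
qed

lemma subflowD:
  assumes s: "subflow V R A M"
  shows "M \<noteq> {}" "cl M" "M \<subseteq> SS" "\<And>\<alpha> g. \<alpha> \<in> M \<Longrightarrow> g \<in> GG \<Longrightarrow> act V R A \<alpha> g \<in> M"
proof -
  show "M \<noteq> {}" using s unfolding subflow_def by blast
  show c: "cl M" using s unfolding subflow_def by blast
  show "M \<subseteq> SS" by (rule closed_sub[OF c])
  show "\<And>\<alpha> g. \<alpha> \<in> M \<Longrightarrow> g \<in> GG \<Longrightarrow> act V R A \<alpha> g \<in> M" using s unfolding subflow_def by blast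
qed

lemma right_ideal: assumes c: "cl M" and inv: "\<And>\<alpha> g. \<alpha> \<in> M \<Longrightarrow> g \<in> GG \<Longrightarrow> act V R A \<alpha> g \<in> M"
  and q: "q \<in> M" and a: "\<alpha> \<in> SS" shows "prod q \<alpha> \<in> M"
proof (rule ccontr)
  assume nM: "prod q \<alpha> \<notin> M"
  have qS: "q \<in> SS" using q closed_sub[OF c] by blast
  obtain n X where X: "X \<in> prod q \<alpha> n" "\<forall>\<beta>\<in>M. X \<notin> \<beta> n" using closedD[OF c prod_SG[OF qS a] nM] by blast
  have "rmul n X q \<in> \<alpha> n" "X \<subseteq> HH n" using X(1) by (auto simp: prod_mem)
  then obtain g where g: "g \<in> GG" "rmul n X q \<in> pr g n" using dense[OF a] by blast
  have "X \<in> prod q (pr g) n" using g(2) \<open>X \<subseteq> HH n\<close> by (simp add: prod_mem)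
  then have "X \<in> act V R A q g n" using act_prod[OF qS g(1)] by simp
  then show False using X(2) inv[OF q g(1)] by blast
qed

lemma minM: assumes m: "minimal_subflow V R A M" and u: "u \<in> M" shows "prod u ` M = M"
proof -
  have sf: "subflow V R A M" and mn: "\<And>N. N \<subseteq> M \<Longrightarrow> subflow V R A N \<Longrightarrow> N = M"
    using m unfolding minimal_subflow_def by blast+
  note d = subflowD[OF sf]
  have uS: "u \<in> SS" using u d(3) by blast
  have sub: "prod u ` M \<subseteq> M"
  proof
    fix z assume "z \<in> prod u ` M"
    then obtain q where "q \<in> M" "z = prod u q" by blast
    moreover then have "q \<in> SS" using d(3) by blast
    ultimately show "z \<in> M" using right_ideal[OF d(2) d(4) u] by blast
  qed
  have "subflow V R A (prod u ` M)" unfolding subflow_def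
  proof (intro conjI ballI)
    show "prod u ` M \<noteq> {}" using d(1) by blast
    show "cl (prod u ` M)" by (rule closed_image[OF uS d(2)])
    fix \<alpha> g assume "\<alpha> \<in> prod u ` M" "g \<in> GG"
    then obtain q where q: "q \<in> M" "\<alpha> = prod u q" by blast
    have qS: "q \<in> SS" using q d(3) by blast
    have "act V R A \<alpha> g = prod u (act V R A q g)" using prod_act[OF uS qS \<open>g \<in> GG\<close>] q(2) by simp
    then show "act V R A \<alpha> g \<in> prod u ` M" using d(4)[OF q(1) \<open>g \<in> GG\<close>] by blast
  qed
  then show ?thesis using mn sub by blast
qed

lemma idem_retr: assumes m: "minimal_subflow V R A M" and u: "u \<in> M" and id: "prod u u = u"
  shows "retraction V R A M (prod u)"
proof -
  have sf: "subflow V R A M" using m unfolding minimal_subflow_def by blast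
  note d = subflowD[OF sf]
  have uS: "u \<in> SS" using u d(3) by blast
  show ?thesis unfolding retraction_def
  proof (intro conjI ballI)
    fix \<alpha> assume "\<alpha> \<in> SS" then show "prod u \<alpha> \<in> M" using right_ideal[OF d(2) d(4) u] by blast
  next
    show "cont (prod u)" by (rule cont_prod[OF uS])
  next
    fix \<alpha> g assume "\<alpha> \<in> SS" "g \<in> GG" then show "prod u (act V R A \<alpha> g) = act V R A (prod u \<alpha>) g"
      by (rule prod_act[OF uS])
  next
    fix \<alpha> assume a: "\<alpha> \<in> M"
    then obtain q where q: "q \<in> M" "\<alpha> = prod u q" using minM[OF m u] by blast
    have qS: "q \<in> SS" using q d(3) by blast
    have "prod u \<alpha> = prod (prod u u) q" using q assoc[OF uS uS qS] by simp
    then show "prod u \<alpha> = \<alpha>" using id q by simp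
  qed
qed

end



context fr begin

abbreviation oc where "oc n S \<equiv> orbit_closure2 V R A n S"
abbreviation cl2 where "cl2 n Z \<equiv> closed2 V R A n Z"
abbreviation act2' where "act2' n S g \<equiv> act2 V R A n S g"

lemma int_un: "X \<inter> (F1 \<union> F2) = Y \<inter> (F1 \<union> F2) \<Longrightarrow> X \<inter> F1 = Y \<inter> F1 \<and> X \<inter> F2 = Y \<inter> F2"
  by auto

lemma oc_mem: "T' \<in> oc n S \<longleftrightarrow> T' \<subseteq> HH n \<and> (\<forall>F. finite F \<and> F \<subseteq> HH n \<longrightarrow> (\<exists>g\<in>GG. act2' n S g \<inter> F = T' \<inter> F))"
  unfolding orbit_closure2_def by simp

lemma common_N: assumes "finite F" "F \<subseteq> HH n" shows "\<exists>N. \<forall>y\<in>F. y ` A n \<subseteq> A N"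
proof -
  have "finite (\<Union>y\<in>F. y ` A n)" using assms(1) A_fin by blast
  moreover have "(\<Union>y\<in>F. y ` A n) \<subseteq> V" using assms(2) HH_V by blast
  ultimately obtain N where "(\<Union>y\<in>F. y ` A n) \<subseteq> A N" using cover by blast
  then show ?thesis by blast
qed

lemma act2_mem: "y \<in> act2' n S g \<longleftrightarrow> y \<in> HH n \<and> restrict (g \<circ> y) (A n) \<in> S"
  unfolding act2_def by simp

lemma rmul_in_oc: assumes q: "q \<in> SS" shows "rmul n S q \<in> oc n S"
  unfolding oc_mem
proof (intro conjI allI impI)
  show "rmul n S q \<subseteq> HH n" by (rule rmul_sub)
  fix F assume F: "finite F \<and> F \<subseteq> HH n"
  obtain N where N: "\<forall>y\<in>F. y ` A n \<subseteq> A N" using common_N F by blast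
  define P where "P y = (if y \<in> rmul n S q then Qs n S y N else HH N - Qs n S y N)" for y
  have Pq: "P y \<in> q N" if "y \<in> F" for y
  proof (cases "y \<in> rmul n S q")
    have yN: "y ` A n \<subseteq> A N" using N that by blast
    case True then show ?thesis unfolding P_def using rmul_iff[OF q yN] by simp
  next
    have yN: "y ` A n \<subseteq> A N" using N that by blast
    case False
    then have "Qs n S y N \<notin> q N" using rmul_iff[OF q yN] that F by auto
    then show ?thesis unfolding P_def using False uf_compl[OF SG_uf[OF q] Qs_sub] by simp
  qed
  have "HH N \<inter> (\<Inter>y\<in>F. P y) \<in> q N" using uf_Inter_fin[OF SG_uf[OF q]] F Pq by blast
  then obtain x where x: "x \<in> HH N \<inter> (\<Inter>y\<in>F. P y)" using uf_ne[OF SG_uf[OF q]] by blast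
  obtain g where g: "g \<in> GG" "restrict g (A N) = x" using EXT x by blast
  have "act2' n S g \<inter> F = rmul n S q \<inter> F"
  proof (intro set_eqI iffI)
    fix y assume y: "y \<in> act2' n S g \<inter> F"
    then have yh: "y \<in> HH n" "restrict (g \<circ> y) (A n) \<in> S" "y \<in> F" by (auto simp: act2_mem)
    have "restrict (restrict g (A N) \<circ> y) (A n) = restrict (g \<circ> y) (A n)" by (rule rr_comp) (use N yh in blast)
    then have "x \<in> Qs n S y N" using yh x g(2) by (simp add: Qs_mem)
    moreover have "x \<in> P y" using x yh by blast
    ultimately show "y \<in> rmul n S q \<inter> F" using yh unfolding P_def by (auto split: if_splits)
  next
    fix y assume y: "y \<in> rmul n S q \<inter> F"
    then have yh: "y \<in> HH n" "y \<in> F" "y \<in> rmul n S q" using rmul_sub by auto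
    have "x \<in> P y" using x yh by blast
    then have "x \<in> Qs n S y N" using yh unfolding P_def by simp
    moreover have "restrict (restrict g (A N) \<circ> y) (A n) = restrict (g \<circ> y) (A n)" by (rule rr_comp) (use N yh in blast)
    ultimately show "y \<in> act2' n S g \<inter> F" using yh g(2) by (simp add: Qs_mem act2_mem)
  qed
  then show "\<exists>g\<in>GG. act2' n S g \<inter> F = rmul n S q \<inter> F" using g(1) by blast
qed

lemma oc_rmul: assumes T': "T' \<in> oc n S" shows "\<exists>q\<in>SS. rmul n S q = T'"
proof -
  have T's: "T' \<subseteq> HH n" using T' oc_mem by blast
  define \<C> where "\<C> = {{q \<in> SS. rmul n S q \<inter> F = T' \<inter> F} | F. finite F \<and> F \<subseteq> HH n}"
  have CI: "{q \<in> SS. rmul n S q \<inter> F = T' \<inter> F} \<in> \<C>" if "finite F" "F \<subseteq> HH n" for F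
    unfolding \<C>_def using that by blast
  have "\<exists>q. \<forall>C\<in>\<C>. q \<in> C"
  proof (rule compact)
    have "{q \<in> SS. rmul n S q \<inter> {} = T' \<inter> {}} \<in> \<C>" by (rule CI) auto
    then show "\<C> \<noteq> {}" by blast
  next
    fix C assume "C \<in> \<C>"
    then obtain F where F: "C = {q \<in> SS. rmul n S q \<inter> F = T' \<inter> F}" "finite F" "F \<subseteq> HH n" unfolding \<C>_def by blast
    show "cl C" unfolding F(1) by (rule closed_rmul[OF F(3)])
    obtain g where g: "g \<in> GG" "act2' n S g \<inter> F = T' \<inter> F" using T' F(2,3) unfolding oc_mem by blast
    have "pr g \<in> C" unfolding F(1) using pr_SG[OF g(1)] rmul_pr[OF g(1)] g(2) by simp
    then show "C \<noteq> {}" by blast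
  next
    fix C1 C2 assume "C1 \<in> \<C>" "C2 \<in> \<C>"
    then obtain F1 F2 where F: "C1 = {q \<in> SS. rmul n S q \<inter> F1 = T' \<inter> F1}" "finite F1" "F1 \<subseteq> HH n"
      "C2 = {q \<in> SS. rmul n S q \<inter> F2 = T' \<inter> F2}" "finite F2" "F2 \<subseteq> HH n" unfolding \<C>_def by blast
    have "{q \<in> SS. rmul n S q \<inter> (F1 \<union> F2) = T' \<inter> (F1 \<union> F2)} \<in> \<C>" by (rule CI) (use F in auto)
    moreover have "{q \<in> SS. rmul n S q \<inter> (F1 \<union> F2) = T' \<inter> (F1 \<union> F2)} \<subseteq> C1 \<inter> C2"
    proof
      fix q assume "q \<in> {q \<in> SS. rmul n S q \<inter> (F1 \<union> F2) = T' \<inter> (F1 \<union> F2)}"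
      then have "q \<in> SS" "rmul n S q \<inter> (F1 \<union> F2) = T' \<inter> (F1 \<union> F2)" by auto
      then show "q \<in> C1 \<inter> C2" unfolding F(1,4) using int_un by simp
    qed
    ultimately show "\<exists>C3\<in>\<C>. C3 \<subseteq> C1 \<inter> C2" by blast
  qed
  then obtain q where q: "\<forall>C\<in>\<C>. q \<in> C" by blast
  have "{q \<in> SS. rmul n S q \<inter> {} = T' \<inter> {}} \<in> \<C>" by (rule CI) auto
  then have "q \<in> {q \<in> SS. rmul n S q \<inter> {} = T' \<inter> {}}" using q by (rule bspec[rotated])
  then have "q \<in> SS" by simp
  moreover have "rmul n S q = T'"
  proof (intro set_eqI)
    fix y show "y \<in> rmul n S q \<longleftrightarrow> y \<in> T'"
    proof (cases "y \<in> HH n")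
      case True
      have "{q \<in> SS. rmul n S q \<inter> {y} = T' \<inter> {y}} \<in> \<C>" by (rule CI) (use True in auto)
      then have "q \<in> {q \<in> SS. rmul n S q \<inter> {y} = T' \<inter> {y}}" using q by (rule bspec[rotated])
      then have eq: "rmul n S q \<inter> {y} = T' \<inter> {y}" by simp
      have "y \<in> rmul n S q \<inter> {y} \<longleftrightarrow> y \<in> T' \<inter> {y}" by (simp only: eq)
      then show ?thesis by simp
    next
      case False then show ?thesis using T's rmul_sub by blast
    qed
  qed
  ultimately show ?thesis by blast
qed

lemma oc_self: assumes S: "S \<subseteq> HH n" shows "S \<in> oc n S"
proof -
  have "act2' n S idV = S" using idV_comp S unfolding act2_def by auto
  then show ?thesis using S idV_G unfolding oc_mem by metis
qed

lemma oc_closed: "cl2 n (oc n S)"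
  unfolding closed2_def
proof (intro conjI allI impI)
  show "oc n S \<subseteq> Pow (HH n)" using oc_mem by blast
  fix T'' assume H: "T'' \<subseteq> HH n \<and> (\<forall>F. finite F \<and> F \<subseteq> HH n \<longrightarrow> (\<exists>T'\<in>oc n S. T' \<inter> F = T'' \<inter> F))"
  show "T'' \<in> oc n S" unfolding oc_mem
  proof (intro conjI allI impI)
    show "T'' \<subseteq> HH n" using H by blast
    fix F assume F: "finite F \<and> F \<subseteq> HH n"
    then obtain T' where T': "T' \<in> oc n S" "T' \<inter> F = T'' \<inter> F" using H by blast
    then obtain g where "g \<in> GG" "act2' n S g \<inter> F = T' \<inter> F" using F unfolding oc_mem by blast
    then show "\<exists>g\<in>GG. act2' n S g \<inter> F = T'' \<inter> F" using T'(2) by metis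
  qed
qed

lemma oc_inv: assumes T': "T' \<in> oc n S" and g: "g \<in> GG" shows "act2' n T' g \<in> oc n S"
proof -
  obtain q where q: "q \<in> SS" "rmul n S q = T'" using oc_rmul[OF T'] by blast
  have "act2' n (rmul n S q) g = rmul n S (act V R A q g)" by (rule rmul_act[OF q(1) g])
  then have "act2' n T' g = rmul n S (act V R A q g)" using q(2) by simp
  then show ?thesis using rmul_in_oc[OF act_SG[OF q(1) g]] by simp
qed

lemma oc_sub: assumes Z: "cl2 n Z" and inv: "\<forall>T\<in>Z. \<forall>g\<in>GG. act2' n T g \<in> Z" and T: "T \<in> Z"
  shows "oc n T \<subseteq> Z"
proof
  fix T' assume T': "T' \<in> oc n T"
  have "T' \<subseteq> HH n \<and> (\<forall>F. finite F \<and> F \<subseteq> HH n \<longrightarrow> (\<exists>T0\<in>Z. T0 \<inter> F = T' \<inter> F))"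
  proof (intro conjI allI impI)
    show "T' \<subseteq> HH n" using T' oc_mem by blast
    fix F assume "finite F \<and> F \<subseteq> HH n"
    then obtain g where "g \<in> GG" "act2' n T g \<inter> F = T' \<inter> F" using T' unfolding oc_mem by blast
    moreover then have "act2' n T g \<in> Z" using inv T by blast
    ultimately show "\<exists>T0\<in>Z. T0 \<inter> F = T' \<inter> F" by blast
  qed
  then show "T' \<in> Z" using Z unfolding closed2_def by blast
qed

lemma min_of_M: assumes m: "minimal_subflow V R A M" and p: "p \<in> M"
  shows "minimal_subset V R A n (rmul n S p)"
proof -
  have sf: "subflow V R A M" using m unfolding minimal_subflow_def by blast
  note d = subflowD[OF sf]
  have pS: "p \<in> SS" using p d(3) by blast
  define T where "T = rmul n S p"
  have Ts: "T \<subseteq> HH n" unfolding T_def by (rule rmul_sub)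
  have inv: "\<forall>T'\<in>oc n T. \<forall>g\<in>GG. act2' n T' g \<in> oc n T" using oc_inv by blast
  have "minimal_flow2 V R A n (oc n T)" unfolding minimal_flow2_def
  proof (intro conjI allI impI)
    show "oc n T \<noteq> {}" using oc_self[OF Ts] by blast
    show "cl2 n (oc n T)" by (rule oc_closed)
    show "\<forall>T'\<in>oc n T. \<forall>g\<in>GG. act2' n T' g \<in> oc n T" by (rule inv)
    fix Z assume Z: "Z \<subseteq> oc n T \<and> Z \<noteq> {} \<and> cl2 n Z \<and> (\<forall>T'\<in>Z. \<forall>g\<in>GG. act2' n T' g \<in> Z)"
    then obtain z where z: "z \<in> Z" by blast
    then have "z \<in> oc n T" using Z by blast
    then obtain q where q: "q \<in> SS" "rmul n T q = z" using oc_rmul by blast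
    have "z = rmul n S (prod p q)" using q KEY[OF pS q(1)] unfolding T_def by simp
    define r where "r = prod p q"
    have rM: "r \<in> M" unfolding r_def by (rule right_ideal[OF d(2) d(4) p q(1)])
    have rS: "r \<in> SS" using rM d(3) by blast
    have "p \<in> prod r ` M" using minM[OF m rM] p by simp
    then obtain q' where q': "q' \<in> M" "p = prod r q'" by blast
    have q'S: "q' \<in> SS" using q'(1) d(3) by blast
    have "T = rmul n S (prod r q')" unfolding T_def using q'(2) by simp
    also have "\<dots> = rmul n (rmul n S r) q'" by (rule KEY[OF rS q'S])
    also have "\<dots> = rmul n z q'" using \<open>z = rmul n S (prod p q)\<close> r_def by simp
    finally have "T \<in> oc n z" using rmul_in_oc[OF q'S] by simp
    also have "oc n z \<subseteq> Z" using oc_sub[OF _ _ z] Z by blast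
    finally have "T \<in> Z" .
    then have "oc n T \<subseteq> Z" using oc_sub Z by blast
    then show "Z = oc n T" using Z by blast
  qed
  then show ?thesis unfolding minimal_subset_def T_def using rmul_sub by blast
qed

lemma min_fix: assumes m: "minimal_subflow V R A M" and T: "minimal_subset V R A n T"
  shows "\<exists>u\<in>M. prod u u = u \<and> rmul n T u = T"
proof -
  have sf: "subflow V R A M" using m unfolding minimal_subflow_def by blast
  note d = subflowD[OF sf]
  have Ts: "T \<subseteq> HH n" and mf: "minimal_flow2 V R A n (oc n T)" using T unfolding minimal_subset_def by auto
  have mfmin: "\<And>Z. Z \<subseteq> oc n T \<Longrightarrow> Z \<noteq> {} \<Longrightarrow> cl2 n Z \<Longrightarrow> (\<forall>T'\<in>Z. \<forall>g\<in>GG. act2' n T' g \<in> Z) \<Longrightarrow> Z = oc n T"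
    using mf unfolding minimal_flow2_def by blast
  define TM where "TM = (\<lambda>q. rmul n T q) ` M"
  have "TM \<subseteq> oc n T" unfolding TM_def using rmul_in_oc d(3) by blast
  moreover have "TM \<noteq> {}" unfolding TM_def using d(1) by blast
  moreover have "cl2 n TM" unfolding closed2_def
  proof (intro conjI allI impI)
    show "TM \<subseteq> Pow (HH n)" unfolding TM_def using rmul_sub by blast
    fix T'' assume H: "T'' \<subseteq> HH n \<and> (\<forall>F. finite F \<and> F \<subseteq> HH n \<longrightarrow> (\<exists>T'\<in>TM. T' \<inter> F = T'' \<inter> F))"
    define \<C> where "\<C> = {M \<inter> {q \<in> SS. rmul n T q \<inter> F = T'' \<inter> F} | F. finite F \<and> F \<subseteq> HH n}"
    have CI: "M \<inter> {q \<in> SS. rmul n T q \<inter> F = T'' \<inter> F} \<in> \<C>" if "finite F" "F \<subseteq> HH n" for F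
      unfolding \<C>_def using that by blast
    have "\<exists>q. \<forall>C\<in>\<C>. q \<in> C"
    proof (rule compact)
      have "M \<inter> {q \<in> SS. rmul n T q \<inter> {} = T'' \<inter> {}} \<in> \<C>" by (rule CI) auto
      then show "\<C> \<noteq> {}" by blast
    next
      fix C assume "C \<in> \<C>"
      then obtain F where F: "C = M \<inter> {q \<in> SS. rmul n T q \<inter> F = T'' \<inter> F}" "finite F" "F \<subseteq> HH n"
        unfolding \<C>_def by blast
      show "cl C" unfolding F(1) by (rule closed_Int[OF d(2) closed_rmul[OF F(3)]])
      obtain T' where "T' \<in> TM" "T' \<inter> F = T'' \<inter> F" using H F(2,3) by blast
      then obtain q where "q \<in> M" "rmul n T q \<inter> F = T'' \<inter> F" unfolding TM_def by blast
      then have "q \<in> C" unfolding F(1) using d(3) by blast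
      then show "C \<noteq> {}" by blast
    next
      fix C1 C2 assume "C1 \<in> \<C>" "C2 \<in> \<C>"
      then obtain F1 F2 where F: "C1 = M \<inter> {q \<in> SS. rmul n T q \<inter> F1 = T'' \<inter> F1}" "finite F1" "F1 \<subseteq> HH n"
        "C2 = M \<inter> {q \<in> SS. rmul n T q \<inter> F2 = T'' \<inter> F2}" "finite F2" "F2 \<subseteq> HH n" unfolding \<C>_def by blast
      have "M \<inter> {q \<in> SS. rmul n T q \<inter> (F1 \<union> F2) = T'' \<inter> (F1 \<union> F2)} \<in> \<C>" by (rule CI) (use F in auto)
      moreover have "M \<inter> {q \<in> SS. rmul n T q \<inter> (F1 \<union> F2) = T'' \<inter> (F1 \<union> F2)} \<subseteq> C1 \<inter> C2"
      proof
        fix q assume "q \<in> M \<inter> {q \<in> SS. rmul n T q \<inter> (F1 \<union> F2) = T'' \<inter> (F1 \<union> F2)}"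
        then have "q \<in> M" "q \<in> SS" "rmul n T q \<inter> (F1 \<union> F2) = T'' \<inter> (F1 \<union> F2)" by auto
        then show "q \<in> C1 \<inter> C2" unfolding F(1,4) using int_un by simp
      qed
      ultimately show "\<exists>C3\<in>\<C>. C3 \<subseteq> C1 \<inter> C2" by blast
    qed
    then obtain q where q: "\<forall>C\<in>\<C>. q \<in> C" by blast
    have "M \<inter> {q \<in> SS. rmul n T q \<inter> {} = T'' \<inter> {}} \<in> \<C>" by (rule CI) auto
    then have "q \<in> M \<inter> {q \<in> SS. rmul n T q \<inter> {} = T'' \<inter> {}}" using q by (rule bspec[rotated])
    then have qM: "q \<in> M" by simp
    have "rmul n T q = T''"
    proof (intro set_eqI)
      fix y show "y \<in> rmul n T q \<longleftrightarrow> y \<in> T''"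
      proof (cases "y \<in> HH n")
        case True
        have "M \<inter> {q \<in> SS. rmul n T q \<inter> {y} = T'' \<inter> {y}} \<in> \<C>" by (rule CI) (use True in auto)
        then have "q \<in> M \<inter> {q \<in> SS. rmul n T q \<inter> {y} = T'' \<inter> {y}}" using q by (rule bspec[rotated])
        then have eq: "rmul n T q \<inter> {y} = T'' \<inter> {y}" by simp
        have "y \<in> rmul n T q \<inter> {y} \<longleftrightarrow> y \<in> T'' \<inter> {y}" by (simp only: eq)
        then show ?thesis by simp
      next
        have "T'' \<subseteq> HH n" using H by (rule conjunct1)
        case False then show ?thesis using \<open>T'' \<subseteq> HH n\<close> rmul_sub by blast
      qed
    qed
    then show "T'' \<in> TM" unfolding TM_def using qM by (rule image_eqI[OF sym])
  qed
  moreover have "\<forall>T'\<in>TM. \<forall>g\<in>GG. act2' n T' g \<in> TM"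
  proof (intro ballI)
    fix T' g assume "T' \<in> TM" "g \<in> GG"
    then obtain q where q: "q \<in> M" "T' = rmul n T q" unfolding TM_def by blast
    have qS: "q \<in> SS" using q(1) d(3) by blast
    have "act2' n (rmul n T q) g = rmul n T (act V R A q g)" by (rule rmul_act[OF qS \<open>g \<in> GG\<close>])
    then have "act2' n T' g = rmul n T (act V R A q g)" using q(2) by simp
    then show "act2' n T' g \<in> TM" unfolding TM_def using d(4)[OF q(1) \<open>g \<in> GG\<close>] by blast
  qed
  ultimately have "TM = oc n T" by (rule mfmin)
  then have "T \<in> TM" using oc_self[OF Ts] by simp
  define Q where "Q = {q \<in> M. rmul n T q = T}"
  have "\<exists>u\<in>Q. prod u u = u"
  proof (rule ellis)
    show "Q \<subseteq> SS" unfolding Q_def using d(3) by blast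
    obtain q0 where "q0 \<in> M" "T = rmul n T q0" using \<open>T \<in> TM\<close> unfolding TM_def by blast
    then have "q0 \<in> Q" unfolding Q_def by simp
    then show "Q \<noteq> {}" by blast
    have e1: "rmul n T q \<inter> HH n = rmul n T q" for q by (rule Int_absorb2[OF rmul_sub])
    have e2: "T \<inter> HH n = T" by (rule Int_absorb2[OF Ts])
    have "Q = M \<inter> {q \<in> SS. rmul n T q \<inter> HH n = T \<inter> HH n}"
    proof (intro set_eqI)
      fix q show "q \<in> Q \<longleftrightarrow> q \<in> M \<inter> {q \<in> SS. rmul n T q \<inter> HH n = T \<inter> HH n}"
        unfolding Q_def e1 e2 using d(3) by blast
    qed
    then show "cl Q" using closed_Int[OF d(2) closed_rmul[of "HH n" n T T]] by simp
  next
    fix p q assume pq: "p \<in> Q" "q \<in> Q"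
    then have pq': "p \<in> M" "q \<in> M" "rmul n T p = T" "rmul n T q = T" unfolding Q_def by auto
    have pS: "p \<in> SS" and qS: "q \<in> SS" using pq' d(3) by auto
    have "rmul n T (prod p q) = T" using KEY[OF pS qS] pq' by simp
    moreover have "prod p q \<in> M" by (rule right_ideal[OF d(2) d(4) pq'(1) qS])
    ultimately show "prod p q \<in> Q" unfolding Q_def by blast
  qed
  then show ?thesis unfolding Q_def by blast
qed

lemma min_pull: assumes m: "minimal_subflow V R A M" and T: "minimal_subset V R A n T" and nN: "n \<le> N"
  shows "minimal_subset V R A N (iu N n T)"
proof -
  obtain u where u: "u \<in> M" "rmul n T u = T" using min_fix[OF m T] by blast
  have sf: "subflow V R A M" using m unfolding minimal_subflow_def by blast
  have uS: "u \<in> SS" using u(1) subflowD(3)[OF sf] by blast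
  have "iu N n T = rmul N (iu N n T) u" using rmul_iup[OF uS nN, of T] u(2) by simp
  then show ?thesis using min_of_M[OF m u(1), of N "iu N n T"] by simp
qed

end



context fr begin

lemma ba_agree:
  assumes a: "\<alpha> \<in> SS" and c: "\<gamma> \<in> SS" and Gs: "Gs \<subseteq> Pow (HH n)"
    and ag: "\<And>G. G \<in> Gs \<Longrightarrow> G \<in> \<alpha> n \<longleftrightarrow> G \<in> \<gamma> n"
    and Y: "Y \<in> gen_ba (HH n) Gs"
  shows "Y \<in> \<alpha> n \<longleftrightarrow> Y \<in> \<gamma> n"
  using Y
proof (induction rule: gen_ba.induct)
  case (gen S) then show ?case using ag by blast
next
  case top then show ?case using uf_top[OF SG_uf[OF a]] uf_top[OF SG_uf[OF c]] by blast
next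
  case (compl S)
  have Ss: "S \<subseteq> HH n" using gen_ba_sub[OF Gs compl.hyps] .
  show ?case using compl.IH uf_compl[OF SG_uf[OF a] Ss] uf_compl[OF SG_uf[OF c] Ss] by blast
next
  case (un S T)
  have Ss: "S \<subseteq> HH n" using gen_ba_sub[OF Gs un.hyps(1)] .
  have Ts: "T \<subseteq> HH n" using gen_ba_sub[OF Gs un.hyps(2)] .
  show ?case using un.IH uf_un[OF SG_uf[OF a] Ss Ts] uf_un[OF SG_uf[OF c] Ss Ts] by blast
qed

lemma min_sub: "minimal_subset V R A n T \<Longrightarrow> T \<subseteq> HH n" unfolding minimal_subset_def by blast

lemma dir2: assumes m: "minimal_subflow V R A M" and B: "\<forall>m. Bprime V R A m = Pow (HH m)"
  and a: "\<alpha> \<in> SS" and c: "\<gamma> \<in> SS" and ne: "\<alpha> \<noteq> \<gamma>"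
  shows "\<exists>\<phi>. retraction V R A M \<phi> \<and> \<phi> \<alpha> \<noteq> \<phi> \<gamma>"
proof -
  obtain m S where S: "S \<in> \<alpha> m" "S \<notin> \<gamma> m" using neq_sep[OF a c ne] by blast
  have Ss: "S \<subseteq> HH m" using SG_sub[OF a S(1)] .
  then have "S \<in> Bprime V R A m" using B by blast
  then obtain n where n: "m \<le> n" "iu n m S \<in> Bn V R A n" unfolding Bprime_def by blast
  have i1: "iu n m S \<in> \<alpha> n" using SG_coh[OF a n(1)] S(1) by blast
  have i2: "iu n m S \<notin> \<gamma> n" using SG_coh[OF c n(1)] S(2) Ss by blast
  have Gs: "{S. minimal_subset V R A n S} \<subseteq> Pow (HH n)" using min_sub by blast
  have "\<exists>T. minimal_subset V R A n T \<and> \<not> (T \<in> \<alpha> n \<longleftrightarrow> T \<in> \<gamma> n)"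
  proof (rule ccontr)
    assume "\<not> ?thesis"
    then have "\<And>G. G \<in> {S. minimal_subset V R A n S} \<Longrightarrow> G \<in> \<alpha> n \<longleftrightarrow> G \<in> \<gamma> n" by blast
    then have "iu n m S \<in> \<alpha> n \<longleftrightarrow> iu n m S \<in> \<gamma> n"
      using ba_agree[OF a c Gs] n(2) unfolding Bn_def by blast
    then show False using i1 i2 by blast
  qed
  then obtain T where T: "minimal_subset V R A n T" "\<not> (T \<in> \<alpha> n \<longleftrightarrow> T \<in> \<gamma> n)" by blast
  obtain u where u: "u \<in> M" "prod u u = u" "rmul n T u = T" using min_fix[OF m T(1)] by blast
  have r: "retraction V R A M (prod u)" by (rule idem_retr[OF m u(1,2)])
  have Ts: "T \<subseteq> HH n" using min_sub[OF T(1)] .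
  have "T \<in> prod u \<alpha> n \<longleftrightarrow> T \<in> \<alpha> n" using u(3) Ts by (simp add: prod_mem)
  moreover have "T \<in> prod u \<gamma> n \<longleftrightarrow> T \<in> \<gamma> n" using u(3) Ts by (simp add: prod_mem)
  ultimately have "prod u \<alpha> \<noteq> prod u \<gamma>" using T(2) by metis
  then show ?thesis using r by blast
qed

lemma dir1: assumes m: "minimal_subflow V R A M"
  and sep: "\<forall>\<alpha>\<in>SS. \<forall>\<gamma>\<in>SS. \<alpha> \<noteq> \<gamma> \<longrightarrow> (\<exists>\<phi>. retraction V R A M \<phi> \<and> \<phi> \<alpha> \<noteq> \<phi> \<gamma>)"
  and Ss: "S \<subseteq> HH m0"
  shows "S \<in> Bprime V R A m0"
proof (rule ccontr)
  assume nB: "S \<notin> Bprime V R A m0"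
  then have nB': "\<And>n. m0 \<le> n \<Longrightarrow> iu n m0 S \<notin> Bn V R A n" using Ss unfolding Bprime_def by blast
  have sf: "subflow V R A M" using m unfolding minimal_subflow_def by blast
  note d = subflowD[OF sf]
  define Z where "Z = GG \<times> GG"
  define sf' where "sf' = (\<lambda>(N::nat, \<C>). {z \<in> Z. restrict (fst z) (A m0) \<in> S \<and> restrict (snd z) (A m0) \<notin> S
      \<and> (\<forall>C\<in>\<C>. restrict (fst z) (A N) \<in> C \<longleftrightarrow> restrict (snd z) (A N) \<in> C)})"
  have sfe: "sf' (N, \<C>) = {z \<in> Z. restrict (fst z) (A m0) \<in> S \<and> restrict (snd z) (A m0) \<notin> S
      \<and> (\<forall>C\<in>\<C>. restrict (fst z) (A N) \<in> C \<longleftrightarrow> restrict (snd z) (A N) \<in> C)}" for N \<C>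
    unfolding sf'_def by simp
  define Ix where "Ix = {(N, \<C>). m0 \<le> N \<and> finite \<C> \<and> (\<forall>C\<in>\<C>. minimal_subset V R A N C)}"
  have Ix: "(N, \<C>) \<in> Ix \<longleftrightarrow> m0 \<le> N \<and> finite \<C> \<and> (\<forall>C\<in>\<C>. minimal_subset V R A N C)" for N \<C>
    unfolding Ix_def by simp
  define B where "B = sf' ` Ix"
  have ne_sf: "sf' (N, \<C>) \<noteq> {}" if "(N, \<C>) \<in> Ix" for N \<C>
  proof -
    have i: "m0 \<le> N" "finite \<C>" "\<forall>C\<in>\<C>. minimal_subset V R A N C" using that by (simp_all add: Ix)
    have Gs: "{S. minimal_subset V R A N S} \<subseteq> Pow (HH N)" using min_sub by blast
    have Cg: "\<C> \<subseteq> gen_ba (HH N) {S. minimal_subset V R A N S}" using i(3) by (auto intro: gen_ba.gen)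
    have "iu N m0 S \<notin> gen_ba (HH N) {S. minimal_subset V R A N S}" using nB'[OF i(1)] unfolding Bn_def .
    then obtain x y where xy: "x \<in> iu N m0 S" "y \<in> HH N - iu N m0 S" "\<forall>c\<in>\<C>. x \<in> c \<longleftrightarrow> y \<in> c"
      using gen_ba_sep[OF Gs i(2) Cg iu_sub] by blast
    have xh: "x \<in> HH N" "restrict x (A m0) \<in> S" using xy(1) by (auto simp: iu_mem)
    have yh: "y \<in> HH N" "restrict y (A m0) \<notin> S" using xy(2) by (auto simp: iu_mem)
    obtain g where g: "g \<in> GG" "restrict g (A N) = x" using EXT[OF xh(1)] by blast
    obtain h where h: "h \<in> GG" "restrict h (A N) = y" using EXT[OF yh(1)] by blast
    have "restrict g (A m0) = restrict x (A m0)" using rr[OF i(1), of g] g(2) by simp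
    moreover have "restrict h (A m0) = restrict y (A m0)" using rr[OF i(1), of h] h(2) by simp
    ultimately have "(g, h) \<in> sf' (N, \<C>)" unfolding sfe Z_def using g h xh yh xy(3) by simp
    then show ?thesis by blast
  qed
  have "\<exists>W. ultrafilter_on Z W \<and> B \<subseteq> W"
  proof (rule uf_exists)
    show "B \<subseteq> Pow Z" unfolding B_def sf'_def by auto
    have "(m0, {}) \<in> Ix" by (simp add: Ix)
    then show "B \<noteq> {}" unfolding B_def by blast
    show "{} \<notin> B"
    proof
      assume "{} \<in> B"
      then obtain i where i: "i \<in> Ix" "sf' i = {}" unfolding B_def by blast
      obtain N \<C> where "i = (N, \<C>)" by (cases i)
      then show False using ne_sf i by blast
    qed
  next
    fix a b assume "a \<in> B" "b \<in> B"
    then obtain i j where ij: "i \<in> Ix" "j \<in> Ix" "a = sf' i" "b = sf' j" unfolding B_def by blast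
    obtain N1 \<C>1 where i: "i = (N1, \<C>1)" by (cases i)
    obtain N2 \<C>2 where j: "j = (N2, \<C>2)" by (cases j)
    have "(N1, \<C>1) \<in> Ix" using ij(1) i by simp
    then have i1: "m0 \<le> N1" "finite \<C>1" "\<forall>C\<in>\<C>1. minimal_subset V R A N1 C" by (simp_all add: Ix)
    have "(N2, \<C>2) \<in> Ix" using ij(2) j by simp
    then have j1: "m0 \<le> N2" "finite \<C>2" "\<forall>C\<in>\<C>2. minimal_subset V R A N2 C" by (simp_all add: Ix)
    define N where "N = max N1 N2"
    have m1: "N1 \<le> N" and m2: "N2 \<le> N" unfolding N_def by auto
    define \<C> where "\<C> = iu N N1 ` \<C>1 \<union> iu N N2 ` \<C>2"
    have "(N, \<C>) \<in> Ix"
    proof -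
      have "m0 \<le> N" using i1(1) m1 by simp
      moreover have "finite \<C>" unfolding \<C>_def using i1(2) j1(2) by simp
      moreover have "\<forall>C\<in>\<C>. minimal_subset V R A N C"
        unfolding \<C>_def using min_pull[OF m _ m1] min_pull[OF m _ m2] i1(3) j1(3) by blast
      ultimately show ?thesis by (simp add: Ix)
    qed
    then have "sf' (N, \<C>) \<in> B" unfolding B_def by blast
    moreover have "sf' (N, \<C>) \<subseteq> a \<inter> b"
    proof
      fix z assume z: "z \<in> sf' (N, \<C>)"
      then have zz: "z \<in> Z" "restrict (fst z) (A m0) \<in> S" "restrict (snd z) (A m0) \<notin> S"
        "\<forall>C\<in>\<C>. restrict (fst z) (A N) \<in> C \<longleftrightarrow> restrict (snd z) (A N) \<in> C" unfolding sfe by auto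
      have G: "fst z \<in> GG" "snd z \<in> GG" using zz(1) unfolding Z_def by auto
      have tr: "restrict w (A N) \<in> iu N N' C \<longleftrightarrow> restrict w (A N') \<in> C" if "w \<in> GG" "N' \<le> N" for w N' C
        using G_HH[OF that(1)] rr[OF that(2), of w] by (simp add: iu_mem)
      have "\<forall>C\<in>\<C>1. restrict (fst z) (A N1) \<in> C \<longleftrightarrow> restrict (snd z) (A N1) \<in> C"
      proof
        fix C assume "C \<in> \<C>1"
        then have "iu N N1 C \<in> \<C>" unfolding \<C>_def by blast
        then show "restrict (fst z) (A N1) \<in> C \<longleftrightarrow> restrict (snd z) (A N1) \<in> C"
          using zz(4) tr[OF G(1) m1, of C] tr[OF G(2) m1, of C] by blast
      qed
      moreover have "\<forall>C\<in>\<C>2. restrict (fst z) (A N2) \<in> C \<longleftrightarrow> restrict (snd z) (A N2) \<in> C"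
      proof
        fix C assume "C \<in> \<C>2"
        then have "iu N N2 C \<in> \<C>" unfolding \<C>_def by blast
        then show "restrict (fst z) (A N2) \<in> C \<longleftrightarrow> restrict (snd z) (A N2) \<in> C"
          using zz(4) tr[OF G(1) m2, of C] tr[OF G(2) m2, of C] by blast
      qed
      ultimately show "z \<in> a \<inter> b" unfolding ij(3,4) i j sfe using zz(1-3) by blast
    qed
    ultimately show "\<exists>c\<in>B. c \<subseteq> a \<inter> b" by blast
  qed
  then obtain W where W: "ultrafilter_on Z W" "B \<subseteq> W" by blast
  have fG: "\<And>z. z \<in> Z \<Longrightarrow> fst z \<in> GG" and sG: "\<And>z. z \<in> Z \<Longrightarrow> snd z \<in> GG" unfolding Z_def by auto
  define \<alpha> where "\<alpha> = piF Z fst W"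
  define \<gamma> where "\<gamma> = piF Z snd W"
  have a: "\<alpha> \<in> SS" unfolding \<alpha>_def by (rule piF_SG[OF W(1) fG])
  have c: "\<gamma> \<in> SS" unfolding \<gamma>_def by (rule piF_SG[OF W(1) sG])
  have "(m0, {}) \<in> Ix" by (simp add: Ix)
  then have "sf' (m0, {}) \<in> B" unfolding B_def by (rule imageI)
  then have P0: "sf' (m0, {}) \<in> W" using W(2) by blast
  have s1: "sf' (m0, {}) \<subseteq> {z \<in> Z. restrict (fst z) (A m0) \<in> S}" unfolding sfe by blast
  have s2: "{z \<in> Z. restrict (fst z) (A m0) \<in> S} \<subseteq> Z" by blast
  have "{z \<in> Z. restrict (fst z) (A m0) \<in> S} \<in> W"
    by (rule uf_mono[OF W(1) P0 s1 s2])
  then have Sa: "S \<in> \<alpha> m0" unfolding \<alpha>_def using Ss by (simp add: piF_mem)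
  have Sc: "S \<notin> \<gamma> m0"
  proof
    assume "S \<in> \<gamma> m0"
    then have "{z \<in> Z. restrict (snd z) (A m0) \<in> S} \<in> W" unfolding \<gamma>_def by (simp add: piF_mem)
    then have "{z \<in> Z. restrict (snd z) (A m0) \<in> S} \<inter> sf' (m0, {}) \<in> W" using uf_int[OF W(1) _ P0] by simp
    moreover have "{z \<in> Z. restrict (snd z) (A m0) \<in> S} \<inter> sf' (m0, {}) = {}" unfolding sfe by blast
    ultimately show False using uf_empty[OF W(1)] by simp
  qed
  have ag: "Bm \<in> \<alpha> n \<longleftrightarrow> Bm \<in> \<gamma> n" if Bm: "minimal_subset V R A n Bm" for n Bm
  proof -
    define N where "N = max m0 n"
    have mN: "m0 \<le> N" and nN: "n \<le> N" unfolding N_def by auto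
    have "minimal_subset V R A N (iu N n Bm)" by (rule min_pull[OF m Bm nN])
    then have "(N, {iu N n Bm}) \<in> Ix" using mN by (simp add: Ix)
    then have "sf' (N, {iu N n Bm}) \<in> B" unfolding B_def by (rule imageI)
    then have P: "sf' (N, {iu N n Bm}) \<in> W" using W(2) by blast
    have Bs: "Bm \<subseteq> HH n" using min_sub[OF Bm] .
    have tr: "restrict w (A N) \<in> iu N n Bm \<longleftrightarrow> restrict w (A n) \<in> Bm" if "w \<in> GG" for w
      using G_HH[OF that] rr[OF nN, of w] by (simp add: iu_mem)
    have key: "\<forall>z\<in>sf' (N, {iu N n Bm}). restrict (fst z) (A n) \<in> Bm \<longleftrightarrow> restrict (snd z) (A n) \<in> Bm"
    proof
      fix z assume z: "z \<in> sf' (N, {iu N n Bm})"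
      then have "z \<in> Z" "restrict (fst z) (A N) \<in> iu N n Bm \<longleftrightarrow> restrict (snd z) (A N) \<in> iu N n Bm"
        unfolding sfe by auto
      then show "restrict (fst z) (A n) \<in> Bm \<longleftrightarrow> restrict (snd z) (A n) \<in> Bm" using tr fG sG by blast
    qed
    show ?thesis
    proof
      assume "Bm \<in> \<alpha> n"
      then have "{z \<in> Z. restrict (fst z) (A n) \<in> Bm} \<in> W" unfolding \<alpha>_def by (simp add: piF_mem)
      then have "{z \<in> Z. restrict (fst z) (A n) \<in> Bm} \<inter> sf' (N, {iu N n Bm}) \<in> W" using uf_int[OF W(1) _ P] by simp
      moreover have "{z \<in> Z. restrict (fst z) (A n) \<in> Bm} \<inter> sf' (N, {iu N n Bm}) \<subseteq> {z \<in> Z. restrict (snd z) (A n) \<in> Bm}"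
        using key by blast
      moreover have "{z \<in> Z. restrict (snd z) (A n) \<in> Bm} \<subseteq> Z" by blast
      ultimately have "{z \<in> Z. restrict (snd z) (A n) \<in> Bm} \<in> W" by (rule uf_mono[OF W(1)])
      then show "Bm \<in> \<gamma> n" unfolding \<gamma>_def using Bs by (simp add: piF_mem)
    next
      assume "Bm \<in> \<gamma> n"
      then have "{z \<in> Z. restrict (snd z) (A n) \<in> Bm} \<in> W" unfolding \<gamma>_def by (simp add: piF_mem)
      then have "{z \<in> Z. restrict (snd z) (A n) \<in> Bm} \<inter> sf' (N, {iu N n Bm}) \<in> W" using uf_int[OF W(1) _ P] by simp
      moreover have "{z \<in> Z. restrict (snd z) (A n) \<in> Bm} \<inter> sf' (N, {iu N n Bm}) \<subseteq> {z \<in> Z. restrict (fst z) (A n) \<in> Bm}"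
        using key by blast
      moreover have "{z \<in> Z. restrict (fst z) (A n) \<in> Bm} \<subseteq> Z" by blast
      ultimately have "{z \<in> Z. restrict (fst z) (A n) \<in> Bm} \<in> W" by (rule uf_mono[OF W(1)])
      then show "Bm \<in> \<alpha> n" unfolding \<alpha>_def using Bs by (simp add: piF_mem)
    qed
  qed
  have "\<alpha> \<noteq> \<gamma>" using Sa Sc by blast
  then obtain \<phi> where \<phi>: "retraction V R A M \<phi>" "\<phi> \<alpha> \<noteq> \<phi> \<gamma>" using sep a c by blast
  define p where "p = \<phi> (pr idV)"
  have pM: "p \<in> M" unfolding p_def using \<phi>(1) pr_SG[OF idV_G] unfolding retraction_def by blast
  have "prod p \<alpha> = prod p \<gamma>"
  proof
    fix k show "prod p \<alpha> k = prod p \<gamma> k"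
    proof (intro set_eqI)
      fix T
      have "minimal_subset V R A k (rmul k T p)" by (rule min_of_M[OF m pM])
      then have "rmul k T p \<in> \<alpha> k \<longleftrightarrow> rmul k T p \<in> \<gamma> k" by (rule ag)
      then show "T \<in> prod p \<alpha> k \<longleftrightarrow> T \<in> prod p \<gamma> k" by (simp add: prod_mem)
    qed
  qed
  moreover have "\<phi> \<alpha> = prod p \<alpha>" "\<phi> \<gamma> = prod p \<gamma>"
    unfolding p_def using retr_rep[OF \<phi>(1) d(3)] a c by auto
  ultimately show False using \<phi>(2) by simp
qed

lemma main: assumes m: "minimal_subflow V R A M"
  shows "(\<forall>\<alpha>\<in>SS. \<forall>\<gamma>\<in>SS. \<alpha> \<noteq> \<gamma> \<longrightarrow> (\<exists>\<phi>. retraction V R A M \<phi> \<and> \<phi> \<alpha> \<noteq> \<phi> \<gamma>))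
         \<longleftrightarrow> (\<forall>m. Bprime V R A m = Pow (HH m))"
proof
  assume sep: "\<forall>\<alpha>\<in>SS. \<forall>\<gamma>\<in>SS. \<alpha> \<noteq> \<gamma> \<longrightarrow> (\<exists>\<phi>. retraction V R A M \<phi> \<and> \<phi> \<alpha> \<noteq> \<phi> \<gamma>)"
  show "\<forall>m. Bprime V R A m = Pow (HH m)"
  proof
    fix m0 show "Bprime V R A m0 = Pow (HH m0)"
    proof
      show "Bprime V R A m0 \<subseteq> Pow (HH m0)" unfolding Bprime_def by blast
      show "Pow (HH m0) \<subseteq> Bprime V R A m0" using dir1[OF m sep] by blast
    qed
  qed
next
  assume "\<forall>m. Bprime V R A m = Pow (HH m)"
  then show "\<forall>\<alpha>\<in>SS. \<forall>\<gamma>\<in>SS. \<alpha> \<noteq> \<gamma> \<longrightarrow> (\<exists>\<phi>. retraction V R A M \<phi> \<and> \<phi> \<alpha> \<noteq> \<phi> \<gamma>)"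
    using dir2[OF m] by blast
qed

end

theorem mainTheorem17:
  fixes V :: "'a set" and R :: "'r \<Rightarrow> 'a list \<Rightarrow> bool" and A :: "nat \<Rightarrow> 'a set"
    and M :: "(nat \<Rightarrow> ('a \<Rightarrow> 'a) set set) set"
  assumes "countable V" and "infinite V"
    and "ultrahomogeneous V R"
    and "exhaustion V A"
    and "minimal_subflow V R A M"
  shows "(\<forall>\<alpha>\<in>SG V R A. \<forall>\<gamma>\<in>SG V R A. \<alpha> \<noteq> \<gamma> \<longrightarrow>
            (\<exists>\<phi>. retraction V R A M \<phi> \<and> \<phi> \<alpha> \<noteq> \<phi> \<gamma>))
         \<longleftrightarrow> (\<forall>m. Bprime V R A m = Pow (H V R A m))"
proof -
  interpret fr V R A using assms(3,4) by unfold_locales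
  show ?thesis by (rule main[OF assms(5)])
qed


end
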